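(* Assume $X_0\in L^\infty$. For every $\beta\in\mathbb{R}$, $\lambda\ge0$ and $\mu\ge0$, there exists some $m_1(\mu)\in\mathscr{M}_1$ such that $$\inf_{Q\in\mathscr{Q}}K(Q,m_1(\mu),\mu;\beta,\lambda)=\sup_{m\in\mathscr{M}_1}\inf_{Q\in\mathscr{Q}}K(Q,m,\mu;\beta,\lambda)=\inf_{Q\in\mathscr{Q}}\sup_{m\in\mathscr{M}_1}K(Q,m,\mu;\beta,\lambda).$$
   Context: $(\Omega,\mathcal{F},\mathbb{P})$ is a complete nonatomic probability space. $\rho\in L^2$ with $\mathbb{P}(\rho>0)=1$ and $\mathrm{Var}[\rho]>0$. For a random variable $X$, $Q_X(t)=\inf\{y:\mathbb{P}(X\le y)>t\}$ for $t\in[0,1)$; $Q_0:=Q_{X_0}$. $\mathscr{Q}$ is the set of increasing, right-continuous $Q:[0,1)\to\mathbb{R}$ with $\int_0^1Q^2<\infty$, extended by $Q(1)=Q(1-)$. $\mathscr{M}_1$ is the set of increasing right-continuous $m:[0,1]\to[0,\infty)$ with $m(1)=1$, identified with the Borel probability measures on $[0,1]$ (mass $m(0)$ at $0$). For $Q\in\mathscr{Q}$ let $A_Q(0)=Q(1-)$ and $A_Q(s)=\frac1s\int_{1-s}^1Q(t)dt$ for $s\in(0,1]$. Define, for $Q\in\mathscr{Q}$, $m\in\mathscr{M}_1$, $$K(Q,m,\mu;\beta,\lambda)=\int_0^1(Q(s)-\beta)^2ds+\lambda\int_0^1Q(s)Q_\rho(1-s)ds-\mu\int_{[0,1]}A_Q(s)dm(s)+\mu\int_{[0,1]}A_{Q_0}(s)dm(s).$$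 *)

theory Defs
  imports "HOL-Probability.Probability"
begin

definition nonatomic :: "'a measure \<Rightarrow> bool" where
  "nonatomic M \<longleftrightarrow> (\<forall>A\<in>sets M. 0 < measure M A \<longrightarrow>
     (\<exists>B\<in>sets M. B \<subseteq> A \<and> 0 < measure M B \<and> measure M B < measure M A))"

definition quantile :: "'a measure \<Rightarrow> ('a \<Rightarrow> real) \<Rightarrow> real \<Rightarrow> real" where
  "quantile M X t = Inf {y. measure M {\<omega>\<in>space M. X \<omega> \<le> y} > t}"

definition QSet :: "(real \<Rightarrow> real) set" where
  "QSet = {Q. mono_on {0..<1} Q \<and> (\<forall>t\<in>{0..<1}. continuous (at_right t) Q) \<and>
              set_borel_measurable lborel {0..<1} Q \<and>
              set_integrable lborel {0..<1} (\<lambda>t. (Q t)\<^sup>2)}"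

text \<open>The class M_1, identified (as in the paper) with Borel probability measures on [0,1]
  (m(t) = m([0,t])); represented as probability measures on the real Borel sets
  concentrated on [0,1].\<close>
definition M1Set :: "real measure set" where
  "M1Set = {m. sets m = sets borel \<and> prob_space m \<and> emeasure m {0..1} = 1}"

definition AQ :: "(real \<Rightarrow> real) \<Rightarrow> real \<Rightarrow> ereal" where
  "AQ Q s = (if s = 0 then (SUP t\<in>{0..<1}. ereal (Q t))
             else ereal ((1 / s) * (LBINT t=1-s..1. Q t)))"

definition ereal_integral :: "'a measure \<Rightarrow> ('a \<Rightarrow> ereal) \<Rightarrow> ereal" where
  "ereal_integral M f = enn2ereal (\<integral>\<^sup>+ x. e2ennreal (f x) \<partial>M)
                       - enn2ereal (\<integral>\<^sup>+ x. e2ennreal (- f x) \<partial>M)"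

definition Kfun :: "'a measure \<Rightarrow> ('a \<Rightarrow> real) \<Rightarrow> ('a \<Rightarrow> real) \<Rightarrow>
    (real \<Rightarrow> real) \<Rightarrow> real measure \<Rightarrow> real \<Rightarrow> real \<Rightarrow> real \<Rightarrow> ereal" where
  "Kfun P \<rho> X0 Q m \<mu> \<beta> lam =
     ereal ((LBINT s=0..1. (Q s - \<beta>)\<^sup>2) + lam * (LBINT s=0..1. Q s * quantile P \<rho> (1 - s)))
     - ereal \<mu> * ereal_integral m (\<lambda>s. if s \<in> {0..1} then AQ Q s else 0)
     + ereal \<mu> * ereal_integral m (\<lambda>s. if s \<in> {0..1} then AQ (quantile P X0) s else 0)"

end

theory Submission
  imports Defs
begin

definition mixcl :: "(real \<Rightarrow> 'a \<Rightarrow> 'a \<Rightarrow> 'a) \<Rightarrow> 'a set \<Rightarrow> bool" where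
  "mixcl mix X \<longleftrightarrow> (\<forall>x\<in>X. \<forall>y\<in>X. \<forall>t\<in>{0..1}. mix t x y \<in> X)"

definition maff :: "(real \<Rightarrow> 'a \<Rightarrow> 'a \<Rightarrow> 'a) \<Rightarrow> 'a set \<Rightarrow> ('a \<Rightarrow> real) \<Rightarrow> bool" where
  "maff mix X f \<longleftrightarrow> (\<forall>x\<in>X. \<forall>y\<in>X. \<forall>t\<in>{0..1}. f (mix t x y) = t * f x + (1 - t) * f y)"

lemma kf_two_eps:
  fixes \<psi> \<phi> :: "'a \<Rightarrow> real"
  assumes mc: "mixcl mix X" and a1: "maff mix X \<psi>" and a2: "maff mix X \<phi>"
    and H: "\<forall>t\<in>{0..1}. \<exists>x\<in>X. t * \<psi> x + (1 - t) * \<phi> x \<ge> c"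
    and e: "\<epsilon> > 0"
  shows "\<exists>x\<in>X. \<psi> x > c - \<epsilon> \<and> \<phi> x > c - \<epsilon>"
proof (rule ccontr)
  assume nb: "\<not> ?thesis"
  define S where "S = {p::real\<times>real. \<exists>x\<in>X. fst p \<le> \<psi> x \<and> snd p \<le> \<phi> x}"
  define U where "U = {p::real\<times>real. fst p > c - \<epsilon> \<and> snd p > c - \<epsilon>}"
  have cS: "convex S"
    unfolding convex_def
  proof (intro ballI allI impI)
    fix p q :: "real \<times> real" and u v :: real
    assume p: "p \<in> S" and q: "q \<in> S" and u: "0 \<le> u" and v: "0 \<le> v" and uv: "u + v = 1"
    from p obtain x where x: "x \<in> X" "fst p \<le> \<psi> x" "snd p \<le> \<phi> x" unfolding S_def by auto
    from q obtain y where y: "y \<in> X" "fst q \<le> \<psi> y" "snd q \<le> \<phi> y" unfolding S_def by auto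
    have ut: "u \<in> {0..1}" using u v uv by auto
    have m: "mix u x y \<in> X" using mc x y ut unfolding mixcl_def by auto
    have "\<psi> (mix u x y) = u * \<psi> x + v * \<psi> y" using a1 x y ut uv unfolding maff_def by auto
    moreover have "\<phi> (mix u x y) = u * \<phi> x + v * \<phi> y" using a2 x y ut uv unfolding maff_def by auto
    moreover have "u * fst p + v * fst q \<le> u * \<psi> x + v * \<psi> y"
      using x y u v by (intro add_mono mult_left_mono) auto
    moreover have "u * snd p + v * snd q \<le> u * \<phi> x + v * \<phi> y"
      using x y u v by (intro add_mono mult_left_mono) auto
    ultimately show "u *\<^sub>R p + v *\<^sub>R q \<in> S" unfolding S_def using m
      by (auto intro!: bexI[of _ "mix u x y"])
  qed
  have cU: "convex U"
    unfolding convex_def U_def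
  proof (intro ballI allI impI, clarsimp)
    fix a b a' b' u v :: real
    assume h: "c - \<epsilon> < a" "c - \<epsilon> < b" "c - \<epsilon> < a'" "c - \<epsilon> < b'" "0 \<le> u" "0 \<le> v" "u + v = 1"
    have "u * (c - \<epsilon>) + v * (c - \<epsilon>) < u * a + v * a'"
    proof (cases "u = 0")
      case True then show ?thesis using h by auto
    next
      case False then have "u > 0" using h by auto
      then show ?thesis using h by (intro add_less_le_mono mult_strict_left_mono mult_left_mono) auto
    qed
    moreover have "u * (c - \<epsilon>) + v * (c - \<epsilon>) < u * b + v * b'"
    proof (cases "u = 0")
      case True then show ?thesis using h by auto
    next
      case False then have "u > 0" using h by auto
      then show ?thesis using h by (intro add_less_le_mono mult_strict_left_mono mult_left_mono) auto
    qed
    moreover have "u * (c - \<epsilon>) + v * (c - \<epsilon>) = c - \<epsilon>" using h(7) by algebra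
    ultimately show "c - \<epsilon> < u * a + v * a' \<and> c - \<epsilon> < u * b + v * b'" by auto
  qed
  obtain x0 where x0: "x0 \<in> X" using H by force
  have neS: "S \<noteq> {}" using x0 unfolding S_def by auto
  have "(c, c) \<in> U" unfolding U_def using e by auto
  then have neU: "U \<noteq> {}" by auto
  have dis: "S \<inter> U = {}"
  proof (rule ccontr)
    assume "S \<inter> U \<noteq> {}"
    then obtain p x where "x \<in> X" "fst p \<le> \<psi> x" "snd p \<le> \<phi> x" "fst p > c - \<epsilon>" "snd p > c - \<epsilon>"
      unfolding S_def U_def by auto
    then show False using nb by force
  qed
  obtain a b where ab: "a \<noteq> 0" "\<forall>p\<in>S. inner a p \<le> b" "\<forall>p\<in>U. inner a p \<ge> b"
    using separating_hyperplane_sets[OF cS cU neS neU dis] by blast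
  obtain a1 a2 where aa: "a = (a1, a2)" by (cases a)
  have inU: "(c - \<epsilon> + \<delta>1, c - \<epsilon> + \<delta>2) \<in> U" if "\<delta>1 > 0" "\<delta>2 > 0" for \<delta>1 \<delta>2
    using that unfolding U_def by auto
  have ineq: "a1 * (c - \<epsilon> + \<delta>1) + a2 * (c - \<epsilon> + \<delta>2) \<ge> b" if "\<delta>1 > 0" "\<delta>2 > 0" for \<delta>1 \<delta>2
    using ab(3) inU[OF that] unfolding aa by (auto simp: inner_Pair)
  have a1p: "a1 \<ge> 0"
  proof (rule ccontr)
    assume "\<not> a1 \<ge> 0" then have n: "a1 < 0" by auto
    define K where "K = b - a1 * (c - \<epsilon> + 1) - a2 * (c - \<epsilon> + 1)"
    define d where "d = (\<bar>K\<bar> + 1) / (- a1)"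
    have dp: "d > 0" unfolding d_def using n by (intro divide_pos_pos) auto
    have ad: "a1 * d = - (\<bar>K\<bar> + 1)" unfolding d_def using n by (simp add: field_simps)
    have "a1 * (c - \<epsilon> + (1 + d)) + a2 * (c - \<epsilon> + 1) \<ge> b" by (rule ineq) (use dp in auto)
    then have "a1 * d \<ge> K" unfolding K_def by (simp add: algebra_simps)
    then show False using ad by (simp add: abs_if split: if_splits)
  qed
  have a2p: "a2 \<ge> 0"
  proof (rule ccontr)
    assume "\<not> a2 \<ge> 0" then have n: "a2 < 0" by auto
    define K where "K = b - a1 * (c - \<epsilon> + 1) - a2 * (c - \<epsilon> + 1)"
    define d where "d = (\<bar>K\<bar> + 1) / (- a2)"
    have dp: "d > 0" unfolding d_def using n by (intro divide_pos_pos) auto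
    have ad: "a2 * d = - (\<bar>K\<bar> + 1)" unfolding d_def using n by (simp add: field_simps)
    have "a1 * (c - \<epsilon> + 1) + a2 * (c - \<epsilon> + (1 + d)) \<ge> b" by (rule ineq) (use dp in auto)
    then have "a2 * d \<ge> K" unfolding K_def by (simp add: algebra_simps)
    then show False using ad by (simp add: abs_if split: if_splits)
  qed
  have sp: "a1 + a2 > 0" using a1p a2p ab(1) aa by (auto simp: zero_prod_def)
  have bb: "b \<le> (a1 + a2) * (c - \<epsilon>)"
  proof (rule ccontr)
    assume "\<not> ?thesis"
    then have g: "b - (a1 + a2) * (c - \<epsilon>) > 0" by auto
    define d where "d = (b - (a1 + a2) * (c - \<epsilon>)) / (2 * (a1 + a2))"
    have dp: "d > 0" unfolding d_def using g sp by auto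
    have "(a1 + a2) * d = (b - (a1 + a2) * (c - \<epsilon>)) / 2" unfolding d_def using sp by (simp add: field_simps)
    moreover have "a1 * (c - \<epsilon> + d) + a2 * (c - \<epsilon> + d) \<ge> b" by (rule ineq) (use dp in auto)
    ultimately show False using g by (simp add: algebra_simps)
  qed
  define t where "t = a1 / (a1 + a2)"
  have t01: "t \<in> {0..1}" unfolding t_def using a1p a2p sp by auto
  obtain x where x: "x \<in> X" "t * \<psi> x + (1 - t) * \<phi> x \<ge> c" using H t01 by blast
  have "(\<psi> x, \<phi> x) \<in> S" unfolding S_def using x by auto
  then have "a1 * \<psi> x + a2 * \<phi> x \<le> b" using ab(2) aa by (auto simp: inner_Pair)
  then have "a1 * \<psi> x + a2 * \<phi> x \<le> (a1 + a2) * (c - \<epsilon>)" using bb by linarith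
  then have "(a1 * \<psi> x + a2 * \<phi> x) / (a1 + a2) \<le> c - \<epsilon>" using sp by (simp add: divide_le_eq mult.commute)
  moreover have "(a1 * \<psi> x + a2 * \<phi> x) / (a1 + a2) = t * \<psi> x + (1 - t) * \<phi> x"
  proof -
    have "1 - t = a2 / (a1 + a2)" unfolding t_def using sp by (simp add: field_simps)
    then show ?thesis unfolding t_def by (simp add: add_divide_distrib)
  qed
  ultimately show False using x e by linarith
qed

lemma kf_two:
  fixes \<psi> \<phi> :: "'a::topological_space \<Rightarrow> real"
  assumes cX: "compact X" and mc: "mixcl mix X" and a1: "maff mix X \<psi>" and a2: "maff mix X \<phi>"
    and c1: "continuous_on X \<psi>" and c2: "continuous_on X \<phi>"
    and H: "\<forall>t\<in>{0..1}. \<exists>x\<in>X. t * \<psi> x + (1 - t) * \<phi> x \<ge> c"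
  shows "\<exists>x\<in>X. \<psi> x \<ge> c \<and> \<phi> x \<ge> c"
proof -
  have ne: "X \<noteq> {}" using H by force
  have cm: "continuous_on X (\<lambda>x. min (\<psi> x) (\<phi> x))" using c1 c2 by (intro continuous_intros)
  obtain x0 where x0: "x0 \<in> X" "\<forall>y\<in>X. min (\<psi> y) (\<phi> y) \<le> min (\<psi> x0) (\<phi> x0)"
    using continuous_attains_sup[OF cX ne cm] by blast
  have "min (\<psi> x0) (\<phi> x0) \<ge> c"
  proof (rule ccontr)
    assume "\<not> ?thesis"
    then have e: "c - min (\<psi> x0) (\<phi> x0) > 0" by auto
    obtain y where "y \<in> X" "\<psi> y > c - (c - min (\<psi> x0) (\<phi> x0))" "\<phi> y > c - (c - min (\<psi> x0) (\<phi> x0))"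
      using kf_two_eps[OF mc a1 a2 H e] by blast
    then show False using x0(2) by force
  qed
  then show ?thesis using x0 by auto
qed

lemma kf_finite:
  fixes Fs :: "('a::t2_space \<Rightarrow> real) set"
  assumes "finite Fs"
  shows "\<forall>X. compact X \<and> X \<noteq> {} \<and> mixcl mix X \<and> (\<forall>\<phi>\<in>Fs. continuous_on X \<phi> \<and> maff mix X \<phi>) \<and>
     (\<forall>w. (\<forall>\<phi>\<in>Fs. w \<phi> \<ge> 0) \<and> sum w Fs = 1 \<longrightarrow> (\<exists>x\<in>X. (\<Sum>\<phi>\<in>Fs. w \<phi> * \<phi> x) \<ge> c))
     \<longrightarrow> (\<exists>x\<in>X. \<forall>\<phi>\<in>Fs. \<phi> x \<ge> c)"
  using assms
proof (induction Fs rule: finite_induct)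
  case empty
  then show ?case by auto
next
  case (insert \<phi> Fs)
  show ?case
  proof (intro allI impI, elim conjE)
    fix X :: "'a set"
    assume cX: "compact X" and ne: "X \<noteq> {}" and mc: "mixcl mix X"
      and ca: "\<forall>\<psi>\<in>insert \<phi> Fs. continuous_on X \<psi> \<and> maff mix X \<psi>"
      and hw: "\<forall>w. (\<forall>\<psi>\<in>insert \<phi> Fs. w \<psi> \<ge> 0) \<and> sum w (insert \<phi> Fs) = 1 \<longrightarrow>
                 (\<exists>x\<in>X. (\<Sum>\<psi>\<in>insert \<phi> Fs. w \<psi> * \<psi> x) \<ge> c)"
    define X' where "X' = {x\<in>X. c \<le> \<phi> x}"
    have cphi: "continuous_on X \<phi>" and aphi: "maff mix X \<phi>" using ca by auto
    have clX': "closed X'" unfolding X'_def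
      by (rule continuous_on_closed_Collect_le) (use cphi compact_imp_closed[OF cX] in auto)
    have cX': "compact X'"
    proof -
      have "X' = X \<inter> X'" unfolding X'_def by auto
      then show ?thesis using compact_Int_closed[OF cX clX'] by simp
    qed
    have neX': "X' \<noteq> {}"
    proof -
      define w where "w = (\<lambda>\<psi>. if \<psi> = \<phi> then 1 else (0::real))"
      have "(\<Sum>\<psi>\<in>insert \<phi> Fs. w \<psi>) = 1" unfolding w_def using insert.hyps by (simp add: sum.insert)
      moreover have "\<And>x. (\<Sum>\<psi>\<in>insert \<phi> Fs. w \<psi> * \<psi> x) = \<phi> x"
      proof -
        fix x
        have "(\<Sum>\<psi>\<in>Fs. w \<psi> * \<psi> x) = 0" using insert.hyps unfolding w_def by (intro sum.neutral) auto
        then show "(\<Sum>\<psi>\<in>insert \<phi> Fs. w \<psi> * \<psi> x) = \<phi> x" using insert.hyps by (simp add: sum.insert w_def)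
      qed
      ultimately obtain x where "x \<in> X" "\<phi> x \<ge> c" using hw[rule_format, of w] unfolding w_def by force
      then show ?thesis unfolding X'_def by auto
    qed
    have mc': "mixcl mix X'" unfolding mixcl_def
    proof (intro ballI)
      fix x y and t :: real assume hx: "x \<in> X'" and hy: "y \<in> X'" and ht: "t \<in> {0..1}"
      have h: "x \<in> X" "c \<le> \<phi> x" "y \<in> X" "c \<le> \<phi> y" "0 \<le> t" "t \<le> 1"
        using hx hy ht unfolding X'_def by auto
      have "t * c + (1 - t) * c \<le> t * \<phi> x + (1 - t) * \<phi> y"
        using h by (intro add_mono mult_left_mono) auto
      moreover have "\<phi> (mix t x y) = t * \<phi> x + (1 - t) * \<phi> y" using aphi h ht unfolding maff_def by auto
      moreover have "t * c + (1 - t) * c = c" by (simp add: algebra_simps)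
      moreover have "mix t x y \<in> X" using mc h ht unfolding mixcl_def by auto
      ultimately show "mix t x y \<in> X'" unfolding X'_def by auto
    qed
    have sub: "X' \<subseteq> X" unfolding X'_def by auto
    have ca': "\<forall>\<psi>\<in>Fs. continuous_on X' \<psi> \<and> maff mix X' \<psi>"
    proof
      fix \<psi> assume p: "\<psi> \<in> Fs"
      then have "continuous_on X \<psi>" "maff mix X \<psi>" using ca by auto
      then show "continuous_on X' \<psi> \<and> maff mix X' \<psi>"
        using sub unfolding maff_def by (auto intro: continuous_on_subset)
    qed
    have hw': "\<forall>w. (\<forall>\<psi>\<in>Fs. w \<psi> \<ge> 0) \<and> sum w Fs = 1 \<longrightarrow> (\<exists>x\<in>X'. (\<Sum>\<psi>\<in>Fs. w \<psi> * \<psi> x) \<ge> c)"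
    proof (intro allI impI, elim conjE)
      fix w :: "('a \<Rightarrow> real) \<Rightarrow> real" assume w0: "\<forall>\<psi>\<in>Fs. w \<psi> \<ge> 0" and w1: "sum w Fs = 1"
      define ps where "ps = (\<lambda>x. \<Sum>\<psi>\<in>Fs. w \<psi> * \<psi> x)"
      have cps: "continuous_on X ps" unfolding ps_def using ca
        by (intro continuous_intros) auto
      have aps: "maff mix X ps" unfolding maff_def ps_def
      proof (intro ballI)
        fix x y and t :: real assume xy: "x \<in> X" "y \<in> X" "t \<in> {0..1}"
        have "(\<Sum>\<psi>\<in>Fs. w \<psi> * \<psi> (mix t x y)) = (\<Sum>\<psi>\<in>Fs. t * (w \<psi> * \<psi> x) + (1 - t) * (w \<psi> * \<psi> y))"
        proof (intro sum.cong refl)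
          fix \<psi> assume "\<psi> \<in> Fs"
          then have "\<psi> (mix t x y) = t * \<psi> x + (1 - t) * \<psi> y" using ca xy unfolding maff_def by auto
          then show "w \<psi> * \<psi> (mix t x y) = t * (w \<psi> * \<psi> x) + (1 - t) * (w \<psi> * \<psi> y)"
            by (simp only:) (simp add: algebra_simps)
        qed
        also have "\<dots> = t * (\<Sum>\<psi>\<in>Fs. w \<psi> * \<psi> x) + (1 - t) * (\<Sum>\<psi>\<in>Fs. w \<psi> * \<psi> y)"
          by (simp add: sum.distrib sum_distrib_left)
        finally show "(\<Sum>\<psi>\<in>Fs. w \<psi> * \<psi> (mix t x y)) = t * (\<Sum>\<psi>\<in>Fs. w \<psi> * \<psi> x) + (1 - t) * (\<Sum>\<psi>\<in>Fs. w \<psi> * \<psi> y)" .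
      qed
      have H2: "\<forall>t\<in>{0..1}. \<exists>x\<in>X. t * ps x + (1 - t) * \<phi> x \<ge> c"
      proof
        fix t :: real assume t: "t \<in> {0..1}"
        define w' where "w' = (\<lambda>\<psi>. if \<psi> = \<phi> then 1 - t else t * w \<psi>)"
        have "\<forall>\<psi>\<in>insert \<phi> Fs. w' \<psi> \<ge> 0" using t w0 unfolding w'_def by auto
        moreover have "sum w' (insert \<phi> Fs) = 1"
        proof -
          have "sum w' (insert \<phi> Fs) = (1 - t) + sum w' Fs" unfolding w'_def using insert.hyps by (simp add: sum.insert)
          also have "sum w' Fs = (\<Sum>\<psi>\<in>Fs. t * w \<psi>)" unfolding w'_def using insert.hyps by (intro sum.cong) auto
          also have "\<dots> = t" using w1 by (simp add: sum_distrib_left[symmetric])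
          finally show ?thesis by simp
        qed
        ultimately obtain x where x: "x \<in> X" "(\<Sum>\<psi>\<in>insert \<phi> Fs. w' \<psi> * \<psi> x) \<ge> c" using hw by blast
        have "(\<Sum>\<psi>\<in>insert \<phi> Fs. w' \<psi> * \<psi> x) = (1 - t) * \<phi> x + (\<Sum>\<psi>\<in>Fs. w' \<psi> * \<psi> x)"
          unfolding w'_def using insert.hyps by (simp add: sum.insert)
        also have "(\<Sum>\<psi>\<in>Fs. w' \<psi> * \<psi> x) = t * ps x"
          unfolding w'_def ps_def using insert.hyps
          by (simp add: sum_distrib_left mult.assoc) (intro sum.cong, auto)
        finally show "\<exists>x\<in>X. t * ps x + (1 - t) * \<phi> x \<ge> c" using x by (auto intro!: bexI[of _ x])
      qed
      obtain x where "x \<in> X" "ps x \<ge> c" "\<phi> x \<ge> c"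
        using kf_two[OF cX mc aps aphi cps cphi H2] by blast
      then show "\<exists>x\<in>X'. (\<Sum>\<psi>\<in>Fs. w \<psi> * \<psi> x) \<ge> c" unfolding X'_def ps_def by auto
    qed
    obtain x where "x \<in> X'" "\<forall>\<psi>\<in>Fs. \<psi> x \<ge> c"
      using insert.IH cX' neX' mc' ca' hw' by blast
    then show "\<exists>x\<in>X. \<forall>\<psi>\<in>insert \<phi> Fs. \<psi> x \<ge> c" unfolding X'_def by auto
  qed
qed

lemma kf_cvxsum:
  fixes Fs :: "('a \<Rightarrow> real) set"
  assumes "finite Fs"
    and cvx: "\<forall>\<phi>1\<in>\<Phi>. \<forall>\<phi>2\<in>\<Phi>. \<forall>t\<in>{0..1}. \<exists>\<phi>\<in>\<Phi>. \<forall>x\<in>X. \<phi> x \<le> t * \<phi>1 x + (1 - t) * \<phi>2 x"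
  shows "Fs \<subseteq> \<Phi> \<longrightarrow> (\<forall>w. (\<forall>\<phi>\<in>Fs. w \<phi> \<ge> 0) \<and> sum w Fs = 1 \<longrightarrow>
     (\<exists>\<phi>0\<in>\<Phi>. \<forall>x\<in>X. \<phi>0 x \<le> (\<Sum>\<psi>\<in>Fs. w \<psi> * \<psi> x)))"
  using assms(1)
proof (induction Fs rule: finite_induct)
  case empty
  then show ?case by auto
next
  case (insert \<phi> Fs)
  show ?case
  proof (intro impI allI, elim conjE)
    fix w :: "('a \<Rightarrow> real) \<Rightarrow> real" assume sub: "insert \<phi> Fs \<subseteq> \<Phi>" and w0: "\<forall>\<psi>\<in>insert \<phi> Fs. w \<psi> \<ge> 0" and w1: "sum w (insert \<phi> Fs) = 1"
    have sw: "w \<phi> + sum w Fs = 1" using w1 insert.hyps by (simp add: sum.insert)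
    have swn: "sum w Fs \<ge> 0" by (intro sum_nonneg) (use w0 in auto)
    have sumI: "(\<Sum>\<psi>\<in>insert \<phi> Fs. w \<psi> * \<psi> x) = w \<phi> * \<phi> x + (\<Sum>\<psi>\<in>Fs. w \<psi> * \<psi> x)" for x
      using insert.hyps by (simp add: sum.insert)
    show "\<exists>\<phi>0\<in>\<Phi>. \<forall>x\<in>X. \<phi>0 x \<le> (\<Sum>\<psi>\<in>insert \<phi> Fs. w \<psi> * \<psi> x)"
    proof (cases "sum w Fs = 0")
      case True
      then have z: "\<forall>\<psi>\<in>Fs. w \<psi> = 0" using sum_nonneg_eq_0_iff[OF insert.hyps(1)] w0 by auto
      then have "(\<Sum>\<psi>\<in>Fs. w \<psi> * \<psi> x) = 0" for x by simp
      moreover have "w \<phi> = 1" using sw True by simp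
      ultimately show ?thesis using sub sumI by (auto intro!: bexI[of _ \<phi>])
    next
      case False
      then have sp: "sum w Fs > 0" using swn by auto
      define w' where "w' = (\<lambda>\<psi>. w \<psi> / sum w Fs)"
      have "\<forall>\<psi>\<in>Fs. w' \<psi> \<ge> 0" using w0 sp unfolding w'_def by auto
      moreover have "sum w' Fs = 1" unfolding w'_def using sp by (simp add: sum_divide_distrib[symmetric])
      ultimately obtain \<phi>' where \<phi>': "\<phi>' \<in> \<Phi>" "\<forall>x\<in>X. \<phi>' x \<le> (\<Sum>\<psi>\<in>Fs. w' \<psi> * \<psi> x)"
        using insert.IH sub by auto
      have t01: "w \<phi> \<in> {0..1}" using w0 sw swn by auto
      obtain \<phi>0 where \<phi>0: "\<phi>0 \<in> \<Phi>" "\<forall>x\<in>X. \<phi>0 x \<le> w \<phi> * \<phi> x + (1 - w \<phi>) * \<phi>' x"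
        using cvx sub \<phi>'(1) t01 by blast
      have "\<forall>x\<in>X. \<phi>0 x \<le> (\<Sum>\<psi>\<in>insert \<phi> Fs. w \<psi> * \<psi> x)"
      proof
        fix x assume x: "x \<in> X"
        have "(1 - w \<phi>) * \<phi>' x \<le> (1 - w \<phi>) * (\<Sum>\<psi>\<in>Fs. w' \<psi> * \<psi> x)"
          using \<phi>'(2) x t01 by (intro mult_left_mono) auto
        also have "\<dots> = (\<Sum>\<psi>\<in>Fs. w \<psi> * \<psi> x)"
        proof -
          have "1 - w \<phi> = sum w Fs" using sw by simp
          then show ?thesis unfolding w'_def using sp by (simp add: sum_distrib_left)
        qed
        finally show "\<phi>0 x \<le> (\<Sum>\<psi>\<in>insert \<phi> Fs. w \<psi> * \<psi> x)" using \<phi>0(2) x sumI[of x] by force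
      qed
      then show ?thesis using \<phi>0 by auto
    qed
  qed
qed

theorem kyfan:
  fixes X :: "'a::t2_space set" and \<Phi> :: "('a \<Rightarrow> real) set"
  assumes cX: "compact X" and ne: "X \<noteq> {}" and mc: "mixcl mix X"
    and ca: "\<forall>\<phi>\<in>\<Phi>. continuous_on X \<phi> \<and> maff mix X \<phi>"
    and cvx: "\<forall>\<phi>1\<in>\<Phi>. \<forall>\<phi>2\<in>\<Phi>. \<forall>t\<in>{0..1}. \<exists>\<phi>\<in>\<Phi>. \<forall>x\<in>X. \<phi> x \<le> t * \<phi>1 x + (1 - t) * \<phi>2 x"
    and hyp: "\<forall>\<phi>\<in>\<Phi>. \<exists>x\<in>X. \<phi> x \<ge> c"
  shows "\<exists>x\<in>X. \<forall>\<phi>\<in>\<Phi>. \<phi> x \<ge> c"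
proof -
  have "X \<inter> (\<Inter>\<phi>\<in>\<Phi>. {x\<in>X. c \<le> \<phi> x}) \<noteq> {}"
  proof (rule compact_imp_fip_image[OF cX])
    fix \<phi> assume "\<phi> \<in> \<Phi>"
    then show "closed {x\<in>X. c \<le> \<phi> x}"
      using ca compact_imp_closed[OF cX] by (intro continuous_on_closed_Collect_le) auto
  next
    fix I' assume fI: "finite I'" and sI: "I' \<subseteq> \<Phi>"
    have "\<exists>x\<in>X. \<forall>\<phi>\<in>I'. \<phi> x \<ge> c"
    proof (rule kf_finite[OF fI, rule_format], intro conjI)
      show "\<forall>\<phi>\<in>I'. continuous_on X \<phi> \<and> maff mix X \<phi>" using ca sI by auto
      show "\<forall>w. (\<forall>\<phi>\<in>I'. 0 \<le> w \<phi>) \<and> sum w I' = 1 \<longrightarrow> (\<exists>x\<in>X. c \<le> (\<Sum>\<phi>\<in>I'. w \<phi> * \<phi> x))"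
      proof (intro allI impI)
        fix w :: "('a \<Rightarrow> real) \<Rightarrow> real" assume w: "(\<forall>\<phi>\<in>I'. 0 \<le> w \<phi>) \<and> sum w I' = 1"
        obtain \<phi>0 where "\<phi>0 \<in> \<Phi>" "\<forall>x\<in>X. \<phi>0 x \<le> (\<Sum>\<psi>\<in>I'. w \<psi> * \<psi> x)"
          using kf_cvxsum[OF fI cvx] sI w by blast
        then show "\<exists>x\<in>X. c \<le> (\<Sum>\<phi>\<in>I'. w \<phi> * \<phi> x)" using hyp by force
      qed
    qed (use cX ne mc in auto)
    then show "X \<inter> (\<Inter>\<phi>\<in>I'. {x\<in>X. c \<le> \<phi> x}) \<noteq> {}" by auto
  qed
  then show ?thesis by auto
qed

definition clip :: "real \<Rightarrow> real" where "clip x = max 0 (min 1 x)"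
definition Lf :: "(real \<Rightarrow> real) \<Rightarrow> real measure \<Rightarrow> real" where
  "Lf g m = (\<integral>x. g (clip x) \<partial>m)"
definition mom :: "real measure \<Rightarrow> nat \<Rightarrow> real" where
  "mom m = (\<lambda>k. Lf (\<lambda>x. x ^ k) m)"

lemma clip_in: "clip x \<in> {0..1}" unfolding clip_def by auto
lemma clip_id: "x \<in> {0..1} \<Longrightarrow> clip x = x" unfolding clip_def by auto
lemma continuous_clip: "continuous_on UNIV clip" unfolding clip_def by (intro continuous_intros)

lemma M1SetD:
  assumes "m \<in> M1Set"
  shows "prob_space m" "sets m = sets borel" "real_distribution m" "AE x in m. x \<in> {0..1}"
    "space m = UNIV"
proof -
  show p: "prob_space m" and s: "sets m = sets borel" using assms unfolding M1Set_def by auto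
  then show "real_distribution m" unfolding real_distribution_def real_distribution_axioms_def by auto
  show sp: "space m = UNIV" using sets_eq_imp_space_eq[OF s] by simp
  interpret prob_space m by fact
  have "emeasure m {0..1} = 1" using assms unfolding M1Set_def by auto
  then have "prob {0..1} = 1" by (simp add: emeasure_eq_measure)
  moreover have "{x\<in>space m. x \<in> {0..1}} = {0..1}" using sp by auto
  moreover have "{0..1::real} \<in> sets m" using s by auto
  ultimately show "AE x in m. x \<in> {0..1}" using prob_Collect_eq_1[of "\<lambda>x. x \<in> {0..1}"] by auto
qed

lemma contg_clip:
  fixes g :: "real \<Rightarrow> real"
  assumes "continuous_on {0..1} g"
  shows "continuous_on UNIV (\<lambda>x. g (clip x))" "\<And>x. isCont (\<lambda>x. g (clip x)) x"
    "\<exists>B. \<forall>x. \<bar>g (clip x)\<bar> \<le> B"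
proof -
  show c: "continuous_on UNIV (\<lambda>x. g (clip x))"
    by (rule continuous_on_compose2[OF assms continuous_clip]) (use clip_in in auto)
  then show "\<And>x. isCont (\<lambda>x. g (clip x)) x" by (simp add: continuous_on_eq_continuous_at)
  have "bounded (g ` {0..1})" by (intro compact_imp_bounded compact_continuous_image assms) auto
  then obtain B where "\<forall>y\<in>g ` {0..1}. norm y \<le> B" using bounded_iff by blast
  then have "\<forall>x. \<bar>g (clip x)\<bar> \<le> B" using clip_in by auto
  then show "\<exists>B. \<forall>x. \<bar>g (clip x)\<bar> \<le> B" by blast
qed

lemma contg_meas: "continuous_on {0..1} (g :: real \<Rightarrow> real) \<Longrightarrow> (\<lambda>x. g (clip x)) \<in> borel_measurable borel"
  using contg_clip(1) by (intro borel_measurable_continuous_onI) auto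

lemma contg_integrable:
  fixes g :: "real \<Rightarrow> real"
  assumes "continuous_on {0..1} g" "m \<in> M1Set"
  shows "integrable m (\<lambda>x. g (clip x))"
proof -
  interpret prob_space m using M1SetD[OF assms(2)] by auto
  obtain B where B: "\<forall>x. \<bar>g (clip x)\<bar> \<le> B" using contg_clip[OF assms(1)] by auto
  show ?thesis
    by (rule integrable_const_bound[of _ B]) (use B contg_meas[OF assms(1)] M1SetD[OF assms(2)] in auto)
qed

lemma cont_pow: "continuous_on {0..1} (\<lambda>x::real. x ^ k)" by (intro continuous_intros)

lemma approx_mom:
  fixes g :: "real \<Rightarrow> real"
  assumes g: "continuous_on {0..1} g" and e: "\<epsilon> > 0"
  shows "\<exists>a n. \<forall>m\<in>M1Set. \<bar>Lf g m - (\<Sum>i\<le>n. a i * mom m i)\<bar> \<le> \<epsilon>"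
proof -
  obtain P where P: "real_polynomial_function P" "\<And>x. x \<in> {0..1} \<Longrightarrow> \<bar>g x - P x\<bar> < \<epsilon>"
    using Stone_Weierstrass_real_polynomial_function[OF compact_Icc g e] by blast
  obtain a n where Pa: "P = (\<lambda>x. \<Sum>i\<le>n. a i * x ^ i)" using P(1) real_polynomial_function_iff_sum by blast
  have "\<forall>m\<in>M1Set. \<bar>Lf g m - (\<Sum>i\<le>n. a i * mom m i)\<bar> \<le> \<epsilon>"
  proof
    fix m assume m: "m \<in> M1Set"
    interpret prob_space m using M1SetD[OF m] by auto
    have ip: "integrable m (\<lambda>x. clip x ^ i)" for i using contg_integrable[OF cont_pow m] by simp
    have "(\<Sum>i\<le>n. a i * mom m i) = (\<Sum>i\<le>n. (\<integral>x. a i * clip x ^ i \<partial>m))"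
      unfolding mom_def Lf_def by simp
    also have "\<dots> = (\<integral>x. (\<Sum>i\<le>n. a i * clip x ^ i) \<partial>m)"
      by (rule Bochner_Integration.integral_sum[symmetric]) (use ip in auto)
    finally have eq: "(\<Sum>i\<le>n. a i * mom m i) = (\<integral>x. P (clip x) \<partial>m)" unfolding Pa by simp
    have iP: "integrable m (\<lambda>x. P (clip x))" unfolding Pa using ip by auto
    have ig: "integrable m (\<lambda>x. g (clip x))" using contg_integrable[OF g m] .
    have "\<bar>Lf g m - (\<integral>x. P (clip x) \<partial>m)\<bar> = \<bar>\<integral>x. g (clip x) - P (clip x) \<partial>m\<bar>"
      unfolding Lf_def using ig iP by simp
    also have "\<dots> \<le> (\<integral>x. \<bar>g (clip x) - P (clip x)\<bar> \<partial>m)" by (rule integral_abs_bound)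
    also have "\<dots> \<le> \<epsilon>"
      by (rule integral_le_const) (use ig iP P(2) clip_in in \<open>auto intro!: less_imp_le\<close>)
    finally show "\<bar>Lf g m - (\<Sum>i\<le>n. a i * mom m i)\<bar> \<le> \<epsilon>" using eq by simp
  qed
  then show ?thesis by blast
qed

lemma Lf_conv:
  fixes g :: "real \<Rightarrow> real"
  assumes g: "continuous_on {0..1} g" and ms: "\<And>n. ms n \<in> M1Set" and m: "m \<in> M1Set"
    and conv: "\<And>k. (\<lambda>n. mom (ms n) k) \<longlonglongrightarrow> mom m k"
  shows "(\<lambda>n. Lf g (ms n)) \<longlonglongrightarrow> Lf g m"
proof (rule LIMSEQ_I)
  fix r :: real assume r: "r > 0"
  obtain a n where an: "\<forall>m\<in>M1Set. \<bar>Lf g m - (\<Sum>i\<le>n. a i * mom m i)\<bar> \<le> r / 3"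
    using approx_mom[OF g, of "r/3"] r by auto
  have "(\<lambda>j. \<Sum>i\<le>n. a i * mom (ms j) i) \<longlonglongrightarrow> (\<Sum>i\<le>n. a i * mom m i)"
    by (intro tendsto_intros conv)
  then obtain N where N: "\<forall>j\<ge>N. norm ((\<Sum>i\<le>n. a i * mom (ms j) i) - (\<Sum>i\<le>n. a i * mom m i)) < r / 3"
    using LIMSEQ_D[of _ _ "r/3"] r by force
  have "\<forall>j\<ge>N. norm (Lf g (ms j) - Lf g m) < r"
  proof (intro allI impI)
    fix j assume "j \<ge> N"
    then have "\<bar>(\<Sum>i\<le>n. a i * mom (ms j) i) - (\<Sum>i\<le>n. a i * mom m i)\<bar> < r / 3" using N by auto
    moreover have "\<bar>Lf g (ms j) - (\<Sum>i\<le>n. a i * mom (ms j) i)\<bar> \<le> r / 3" using an ms by auto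
    moreover have "\<bar>Lf g m - (\<Sum>i\<le>n. a i * mom m i)\<bar> \<le> r / 3" using an m by auto
    ultimately show "norm (Lf g (ms j) - Lf g m) < r" by (simp add: abs_if split: if_splits) linarith?
  qed
  then show "\<exists>no. \<forall>n\<ge>no. norm (Lf g (ms n) - Lf g m) < r" by blast
qed

lemma Lf_lin:
  fixes g :: "real \<Rightarrow> real"
  assumes g: "continuous_on {0..1} g" and m: "m \<in> M1Set" and m1: "m1 \<in> M1Set" and m2: "m2 \<in> M1Set"
    and eq: "mom m = (\<lambda>k. t * mom m1 k + (1 - t) * mom m2 k)"
  shows "Lf g m = t * Lf g m1 + (1 - t) * Lf g m2"
proof (rule ccontr)
  define D where "D = Lf g m - (t * Lf g m1 + (1 - t) * Lf g m2)"
  assume "Lf g m \<noteq> t * Lf g m1 + (1 - t) * Lf g m2"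
  then have Dp: "\<bar>D\<bar> > 0" unfolding D_def by auto
  define C where "C = 1 + \<bar>t\<bar> + \<bar>1 - t\<bar>"
  have Cp: "C > 0" unfolding C_def by auto
  define e where "e = \<bar>D\<bar> / (2 * C)"
  have ep: "e > 0" unfolding e_def using Dp Cp by auto
  obtain a n where an: "\<forall>m\<in>M1Set. \<bar>Lf g m - (\<Sum>i\<le>n. a i * mom m i)\<bar> \<le> e"
    using approx_mom[OF g ep] by auto
  define P where "P = (\<lambda>m. \<Sum>i\<le>n. a i * mom m i)"
  have Pm: "P m = t * P m1 + (1 - t) * P m2"
  proof -
    have "P m = (\<Sum>i\<le>n. t * (a i * mom m1 i) + (1 - t) * (a i * mom m2 i))"
      unfolding P_def eq by (intro sum.cong) (auto simp: algebra_simps)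
    also have "\<dots> = t * P m1 + (1 - t) * P m2" unfolding P_def
      by (simp add: sum.distrib sum_distrib_left)
    finally show ?thesis .
  qed
  have h0: "\<bar>Lf g m - P m\<bar> \<le> e" and h1: "\<bar>Lf g m1 - P m1\<bar> \<le> e" and h2: "\<bar>Lf g m2 - P m2\<bar> \<le> e"
    using an m m1 m2 unfolding P_def by auto
  have "\<bar>D\<bar> = \<bar>(Lf g m - P m) - t * (Lf g m1 - P m1) - (1 - t) * (Lf g m2 - P m2)\<bar>"
    unfolding D_def Pm by (simp add: algebra_simps)
  also have "\<dots> \<le> \<bar>Lf g m - P m\<bar> + \<bar>t\<bar> * \<bar>Lf g m1 - P m1\<bar> + \<bar>1 - t\<bar> * \<bar>Lf g m2 - P m2\<bar>"
    by (simp add: abs_mult[symmetric])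
  also have "\<dots> \<le> e + \<bar>t\<bar> * e + \<bar>1 - t\<bar> * e"
    by (intro add_mono mult_left_mono h0 h1 h2) auto
  also have "\<dots> = C * e" unfolding C_def by (simp add: algebra_simps)
  also have "\<dots> = \<bar>D\<bar> / 2" unfolding e_def using Cp by simp
  finally show False using Dp by simp
qed

lemma Lf_uniq:
  fixes g :: "real \<Rightarrow> real"
  assumes g: "continuous_on {0..1} g" and m: "m \<in> M1Set" and m1: "m1 \<in> M1Set" and eq: "mom m = mom m1"
  shows "Lf g m = Lf g m1"
  using Lf_lin[OF g m m1 m1, of 1] eq by simp

lemma tendsto_fun_iff:
  fixes F :: "'b \<Rightarrow> nat \<Rightarrow> real"
  shows "(F \<longlongrightarrow> l) G \<longleftrightarrow> (\<forall>k. ((\<lambda>n. F n k) \<longlongrightarrow> l k) G)"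
proof -
  have "limitin (product_topology (\<lambda>i. euclidean) UNIV) F l G \<longleftrightarrow> (\<forall>k. ((\<lambda>n. F n k) \<longlongrightarrow> l k) G)"
    by (simp add: limitin_componentwise)
  then show ?thesis by (simp add: euclidean_product_topology)
qed

definition MSet :: "(nat \<Rightarrow> real) set" where "MSet = mom ` M1Set"
definition rep :: "(nat \<Rightarrow> real) \<Rightarrow> real measure" where "rep y = (SOME m. m \<in> M1Set \<and> mom m = y)"
definition mixf :: "real \<Rightarrow> (nat \<Rightarrow> real) \<Rightarrow> (nat \<Rightarrow> real) \<Rightarrow> (nat \<Rightarrow> real)" where
  "mixf t y1 y2 = (\<lambda>k. t * y1 k + (1 - t) * y2 k)"

lemma rep: "y \<in> MSet \<Longrightarrow> rep y \<in> M1Set \<and> mom (rep y) = y"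
  unfolding MSet_def rep_def by (rule someI_ex) auto

lemma mom_nonneg: "m \<in> M1Set \<Longrightarrow> mom m k \<ge> 0"
  unfolding mom_def Lf_def by (rule Bochner_Integration.integral_nonneg) (use clip_in in auto)

lemma mix_exists:
  assumes m1: "m1 \<in> M1Set" and m2: "m2 \<in> M1Set" and t: "t \<in> {0..1}"
  shows "\<exists>m\<in>M1Set. mom m = mixf t (mom m1) (mom m2)"
proof -
  define B where "B = measure_pmf (bernoulli_pmf t)"
  define K where "K = (\<lambda>b. if b then m1 else m2)"
  define m where "m = B \<bind> K"
  have sb: "K b \<in> space (subprob_algebra borel)" for b
    unfolding K_def using M1SetD[OF m1] M1SetD[OF m2]
    by (auto simp: space_subprob_algebra intro: prob_space_imp_subprob_space)
  have KM: "K \<in> B \<rightarrow>\<^sub>M subprob_algebra borel" unfolding B_def using sb by simp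
  have spB: "space B \<noteq> {}" unfolding B_def by simp
  have sets: "sets m = sets borel" unfolding m_def
    by (rule sets_bind[OF _ spB]) (use M1SetD[OF m1] M1SetD[OF m2] in \<open>auto simp: K_def\<close>)
  have spm: "space m = UNIV" using sets_eq_imp_space_eq[OF sets] by simp
  have em: "emeasure m A = emeasure m1 A * ennreal t + emeasure m2 A * ennreal (1 - t)" if A: "A \<in> sets borel" for A
  proof -
    have "emeasure m A = (\<integral>\<^sup>+b. emeasure (K b) A \<partial>B)" unfolding m_def
      by (rule emeasure_bind[OF spB KM A])
    also have "\<dots> = emeasure m1 A * ennreal t + emeasure m2 A * ennreal (1 - t)"
      unfolding B_def K_def using t by (subst nn_integral_bernoulli_pmf) auto
    finally show ?thesis .
  qed
  have "emeasure m1 UNIV = 1" using prob_space.emeasure_space_1[OF M1SetD(1)[OF m1]] M1SetD(5)[OF m1] by simp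
  moreover have "emeasure m2 UNIV = 1" using prob_space.emeasure_space_1[OF M1SetD(1)[OF m2]] M1SetD(5)[OF m2] by simp
  ultimately have e1: "emeasure m1 A = 1" "emeasure m2 A = 1" if "A = UNIV \<or> A = {0..1}" for A
    using that m1 m2 unfolding M1Set_def by auto
  have one: "ennreal t + ennreal (1 - t) = 1" using t by (simp add: ennreal_plus[symmetric])
  have ps: "prob_space m"
    by (rule prob_spaceI) (use em[of UNIV] e1[of UNIV] one spm in auto)
  have e01: "emeasure m {0..1} = 1" using em[of "{0..1}"] e1[of "{0..1}"] one by auto
  have mM: "m \<in> M1Set" unfolding M1Set_def using ps sets e01 by auto
  have "mom m k = t * mom m1 k + (1 - t) * mom m2 k" for k
  proof -
    have meas: "(\<lambda>x. clip x ^ k) \<in> borel_measurable borel" using contg_meas[OF cont_pow] by simp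
    have nn: "\<And>mm. mm \<in> M1Set \<Longrightarrow> (\<integral>\<^sup>+x. ennreal (clip x ^ k) \<partial>mm) = ennreal (mom mm k)"
    proof -
      fix mm assume mm: "mm \<in> M1Set"
      show "(\<integral>\<^sup>+x. ennreal (clip x ^ k) \<partial>mm) = ennreal (mom mm k)"
        unfolding mom_def Lf_def using contg_integrable[OF cont_pow mm] clip_in
        by (subst nn_integral_eq_integral) auto
    qed
    have "(\<integral>\<^sup>+x. ennreal (clip x ^ k) \<partial>m) = (\<integral>\<^sup>+b. (\<integral>\<^sup>+x. ennreal (clip x ^ k) \<partial>K b) \<partial>B)"
      unfolding m_def by (rule nn_integral_bind[OF _ KM]) (use meas in auto)
    also have "\<dots> = ennreal (mom m1 k) * ennreal t + ennreal (mom m2 k) * ennreal (1 - t)"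
      unfolding B_def K_def using t nn[OF m1] nn[OF m2] by (subst nn_integral_bernoulli_pmf) auto
    also have "\<dots> = ennreal (t * mom m1 k + (1 - t) * mom m2 k)"
    proof -
      have a: "ennreal (mom m1 k) * ennreal t = ennreal (t * mom m1 k)"
        using t mom_nonneg[OF m1] by (subst ennreal_mult[symmetric]) (auto simp: mult.commute)
      have b: "ennreal (mom m2 k) * ennreal (1 - t) = ennreal ((1 - t) * mom m2 k)"
        using t mom_nonneg[OF m2] by (subst ennreal_mult[symmetric]) (auto simp: mult.commute)
      show ?thesis unfolding a b
        using t mom_nonneg[OF m1] mom_nonneg[OF m2] by (subst ennreal_plus[symmetric]) auto
    qed
    finally have "(\<integral>\<^sup>+x. ennreal (clip x ^ k) \<partial>m) = ennreal (t * mom m1 k + (1 - t) * mom m2 k)" .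
    moreover have "(\<integral>\<^sup>+x. ennreal (clip x ^ k) \<partial>m) = ennreal (mom m k)" using nn[OF mM] .
    moreover have "t * mom m1 k + (1 - t) * mom m2 k \<ge> 0" "mom m k \<ge> 0"
      using t mom_nonneg[OF m1] mom_nonneg[OF m2] mom_nonneg[OF mM] by auto
    ultimately show ?thesis by simp
  qed
  then show ?thesis using mM unfolding mixf_def by (auto intro!: bexI[of _ m])
qed

lemma MSet_mixcl: "y1 \<in> MSet \<Longrightarrow> y2 \<in> MSet \<Longrightarrow> t \<in> {0..1} \<Longrightarrow> mixf t y1 y2 \<in> MSet"
  using mix_exists[of "rep y1" "rep y2" t] rep[of y1] rep[of y2] unfolding MSet_def by force

lemma M1Set_nonempty: "return borel (0::real) \<in> M1Set"
  unfolding M1Set_def by (auto simp: prob_space_return emeasure_return)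

lemma MSet_nonempty: "MSet \<noteq> {}" unfolding MSet_def using M1Set_nonempty by auto

lemma compact_MSet: "compact MSet"
proof -
  have "seq_compact MSet"
  proof (rule seq_compactI)
    fix f :: "nat \<Rightarrow> nat \<Rightarrow> real" assume f: "\<forall>n. f n \<in> MSet"
    have "\<forall>n. \<exists>m. m \<in> M1Set \<and> mom m = f n"
    proof
      fix n
      have "f n \<in> mom ` M1Set" using f unfolding MSet_def by auto
      then obtain m where "m \<in> M1Set" "f n = mom m" by (rule imageE)
      then show "\<exists>m. m \<in> M1Set \<and> mom m = f n" by auto
    qed
    then obtain ms where ms: "\<forall>n. ms n \<in> M1Set \<and> mom (ms n) = f n" by metis
    have m01: "measure (ms n) {0..1} = 1" for n
      using ms unfolding M1Set_def by (auto simp: measure_def)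
    have tight: "tight ms" unfolding tight_def
    proof (intro conjI allI impI)
      show "real_distribution (ms n)" for n using M1SetD(3) ms by auto
      fix \<epsilon> :: real assume e: "\<epsilon> > 0"
      have "measure (ms n) {-1<..1} > 1 - \<epsilon>" for n
      proof -
        interpret prob_space "ms n" using M1SetD(1) ms by auto
        have "measure (ms n) {0..1} \<le> measure (ms n) {-1<..1}"
          by (rule finite_measure_mono) (use M1SetD(2) ms in auto)
        then show ?thesis using m01[of n] e by auto
      qed
      then have "(-1::real) < 1 \<and> (\<forall>n. 1 - \<epsilon> < measure (ms n) {-1<..1})" by auto
      then show "\<exists>a b::real. a < b \<and> (\<forall>n. 1 - \<epsilon> < measure (ms n) {a<..b})" by blast
    qed
    obtain r M where r: "strict_mono r" and M: "real_distribution M" and wc: "weak_conv_m (ms \<circ> id \<circ> r) M"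
      using tight_imp_convergent_subsubsequence[OF tight strict_mono_id] by blast
    interpret M: real_distribution M by fact
    have rd: "\<And>n. real_distribution ((ms \<circ> id \<circ> r) n)" using M1SetD(3) ms by auto
    define h where "h = (\<lambda>x. min 1 \<bar>x - clip x\<bar>)"
    have hc: "isCont h x" for x unfolding h_def clip_def by (intro continuous_intros)
    have hb: "norm (h x) \<le> 1" for x unfolding h_def by auto
    have hm: "h \<in> borel_measurable borel" using hc by (intro borel_measurable_continuous_onI) (simp add: continuous_at_imp_continuous_on)
    have h0: "(\<integral>x. h x \<partial>(ms \<circ> id \<circ> r) n) = 0" for n
    proof -
      have "AE x in ms (r n). x \<in> {0..1}" using M1SetD(4) ms by auto
      then have "AE x in ms (r n). h x = 0" by eventually_elim (auto simp: h_def clip_id)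
      then show ?thesis by (simp add: integral_eq_zero_AE)
    qed
    have "(\<lambda>n. \<integral>x. h x \<partial>(ms \<circ> id \<circ> r) n) \<longlonglongrightarrow> (\<integral>x. h x \<partial>M)"
      by (rule weak_conv_imp_integral_bdd_continuous_conv[OF rd M wc hc hb])
    then have hM: "(\<integral>x. h x \<partial>M) = 0" using h0 by (simp add: LIMSEQ_const_iff)
    have ihM: "integrable M h"
      by (rule M.integrable_const_bound[of _ 1]) (use hb hm M.events_eq_borel in auto)
    have "AE x in M. h x = 0"
      using integral_nonneg_eq_0_iff_AE[OF ihM] hM unfolding h_def by auto
    then have ae01: "AE x in M. x \<in> {0..1}"
      by eventually_elim (auto simp: h_def clip_def split: if_splits)
    have spM: "space M = UNIV" using sets_eq_imp_space_eq[OF M.events_eq_borel] by simp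
    have "M.prob {x\<in>space M. x \<in> {0..1}} = 1"
      using M.prob_Collect_eq_1[of "\<lambda>x. x \<in> {0..1}"] ae01 spM M.events_eq_borel by auto
    moreover have "{x\<in>space M. x \<in> {0..1}} = {0..1::real}" using spM by auto
    ultimately have "emeasure M {0..1} = 1" by (simp add: M.emeasure_eq_measure)
    then have MM: "M \<in> M1Set" unfolding M1Set_def using M.events_eq_borel M.prob_space_axioms by auto
    have "(\<lambda>n. mom (ms (r n)) k) \<longlonglongrightarrow> mom M k" for k
    proof -
      have "(\<lambda>n. \<integral>x. clip x ^ k \<partial>(ms \<circ> id \<circ> r) n) \<longlonglongrightarrow> (\<integral>x. clip x ^ k \<partial>M)"
        by (rule weak_conv_imp_integral_bdd_continuous_conv[OF rd M wc, of _ 1])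
           (use contg_clip(2)[OF cont_pow] clip_in in \<open>auto intro: power_le_one\<close>)
      then show ?thesis unfolding mom_def Lf_def by simp
    qed
    then have "(f \<circ> r) \<longlonglongrightarrow> mom M" using ms by (simp add: tendsto_fun_iff o_def)
    then show "\<exists>l\<in>MSet. \<exists>r::nat\<Rightarrow>nat. strict_mono r \<and> (f \<circ> r) \<longlonglongrightarrow> l"
      using r MM unfolding MSet_def by blast
  qed
  then show ?thesis using seq_compact_eq_compact by blast
qed

lemma Lf_rep_cont:
  fixes g :: "real \<Rightarrow> real"
  assumes g: "continuous_on {0..1} g"
  shows "continuous_on MSet (\<lambda>y. Lf g (rep y))"
  unfolding continuous_on_sequentially
proof (intro allI ballI impI, elim conjE)
  fix x :: "nat \<Rightarrow> nat \<Rightarrow> real" and a assume a: "a \<in> MSet" and x: "\<forall>n. x n \<in> MSet" and xa: "x \<longlonglongrightarrow> a"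
  have "(\<lambda>n. Lf g (rep (x n))) \<longlonglongrightarrow> Lf g (rep a)"
  proof (rule Lf_conv[OF g])
    show "rep (x n) \<in> M1Set" for n using rep x by auto
    show "rep a \<in> M1Set" using rep a by auto
    show "(\<lambda>n. mom (rep (x n)) k) \<longlonglongrightarrow> mom (rep a) k" for k
      using xa rep x rep[OF a] by (simp add: tendsto_fun_iff)
  qed
  then show "((\<lambda>y. Lf g (rep y)) \<circ> x) \<longlonglongrightarrow> Lf g (rep a)" by (simp add: o_def)
qed

lemma Lf_rep_aff:
  fixes g :: "real \<Rightarrow> real"
  assumes g: "continuous_on {0..1} g" and y1: "y1 \<in> MSet" and y2: "y2 \<in> MSet" and t: "t \<in> {0..1}"
  shows "Lf g (rep (mixf t y1 y2)) = t * Lf g (rep y1) + (1 - t) * Lf g (rep y2)"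
proof -
  have y: "mixf t y1 y2 \<in> MSet" using MSet_mixcl[OF y1 y2 t] .
  show ?thesis
    by (rule Lf_lin[OF g]) (use rep[OF y] rep[OF y1] rep[OF y2] in \<open>auto simp: mixf_def\<close>)
qed

lemma Lf_rep_mom:
  fixes g :: "real \<Rightarrow> real"
  assumes g: "continuous_on {0..1} g" and m: "m \<in> M1Set"
  shows "Lf g (rep (mom m)) = Lf g m"
proof -
  have y: "mom m \<in> MSet" using m unfolding MSet_def by auto
  show ?thesis by (rule Lf_uniq[OF g]) (use rep[OF y] m in auto)
qed

lemma q_bdd_below:
  fixes C :: "real \<Rightarrow> real"
  assumes mono: "mono C" and bot: "(C \<longlongrightarrow> 0) at_bot" and t: "t > 0"
  shows "bdd_below {y. C y > t}"
proof -
  have "eventually (\<lambda>y. C y < t) at_bot" using order_tendstoD(2)[OF bot t] .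
  then obtain y0 where y0: "\<And>y. y \<le> y0 \<Longrightarrow> C y < t" by (auto simp: eventually_at_bot_linorder)
  have "\<forall>y\<in>{y. C y > t}. y0 \<le> y"
  proof
    fix y assume "y \<in> {y. C y > t}"
    then show "y0 \<le> y" using y0[of y] by (cases "y \<le> y0") auto
  qed
  then show ?thesis by (auto intro: bdd_belowI)
qed

lemma q_nonempty:
  fixes C :: "real \<Rightarrow> real"
  assumes top: "(C \<longlongrightarrow> 1) at_top" and t: "t < 1"
  shows "{y. C y > t} \<noteq> {}"
proof -
  have "eventually (\<lambda>y. C y > t) at_top" using order_tendstoD(1)[OF top t] .
  then obtain y where "C y > t" by (auto simp: eventually_at_top_linorder)
  then show ?thesis by auto
qed

lemma q_le:
  fixes C :: "real \<Rightarrow> real"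
  assumes "bdd_below {y. C y > t}" "C x > t"
  shows "Inf {y. C y > t} \<le> x"
  using assms by (intro cInf_lower) auto

lemma q_ge:
  fixes C :: "real \<Rightarrow> real"
  assumes mono: "mono C" and rc: "continuous (at_right x) C" and ne: "{y. C y > t} \<noteq> {}"
    and le: "Inf {y. C y > t} \<le> x"
  shows "t \<le> C x"
proof (rule ccontr)
  assume "\<not> t \<le> C x"
  then have lt: "C x < t" by simp
  have "(C \<longlongrightarrow> C x) (at_right x)" using rc by (simp add: continuous_within)
  then have "eventually (\<lambda>y. C y < t) (at_right x)" using order_tendstoD(2) lt by blast
  then obtain b where b: "b > x" "\<And>y. x < y \<Longrightarrow> y < b \<Longrightarrow> C y < t"
    by (auto simp: eventually_at_right_field)
  define y1 where "y1 = (x + b) / 2"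
  have y1: "x < y1" "y1 < b" using b unfolding y1_def by auto
  have "\<forall>z\<in>{y. C y > t}. y1 \<le> z"
  proof
    fix z assume z: "z \<in> {y. C y > t}"
    show "y1 \<le> z"
    proof (rule ccontr)
      assume "\<not> y1 \<le> z"
      then have "C z \<le> C y1" using mono by (auto simp: mono_def)
      then show False using b(2)[OF y1] z by auto
    qed
  qed
  then have "y1 \<le> Inf {y. C y > t}" using ne by (intro cInf_greatest) auto
  then show False using le y1 by auto
qed

lemma q_mono:
  fixes C :: "real \<Rightarrow> real"
  assumes ne: "{y. C y > t2} \<noteq> {}" and bd: "bdd_below {y. C y > t1}" and t: "t1 \<le> t2"
  shows "Inf {y. C y > t1} \<le> Inf {y. C y > t2}"
  by (rule cInf_superset_mono[OF ne bd]) (use t in auto)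

lemma quantile_cdf:
  assumes P: "prob_space P" and X: "X \<in> borel_measurable P"
  shows "quantile P X t = Inf {y. cdf (distr P borel X) y > t}"
proof -
  have "cdf (distr P borel X) y = measure P {\<omega>\<in>space P. X \<omega> \<le> y}" for y
  proof -
    have "cdf (distr P borel X) y = measure P (X -` {..y} \<inter> space P)"
      unfolding cdf_def using X by (subst measure_distr) auto
    also have "X -` {..y} \<inter> space P = {\<omega>\<in>space P. X \<omega> \<le> y}" by auto
    finally show ?thesis .
  qed
  then show ?thesis unfolding quantile_def by simp
qed

lemma distr_quantile:
  assumes D: "real_distribution D"
  defines "q \<equiv> (\<lambda>t. Inf {y. cdf D y > t})"
  shows "distr (restrict_space lborel {0<..<1::real}) borel q = D"
proof -
  interpret D: real_distribution D by fact
  let ?C = "cdf D"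
  have mono: "mono ?C" by (auto intro: monoI D.cdf_nondecreasing)
  have bot: "(?C \<longlongrightarrow> 0) at_bot" by (rule D.cdf_lim_at_bot)
  have top: "(?C \<longlongrightarrow> 1) at_top" by (rule D.cdf_lim_at_top_prob)
  have rc: "\<And>x. continuous (at_right x) ?C" by (rule D.cdf_is_right_cont)
  have qmono: "mono_on {0<..<1} q" unfolding q_def
    by (intro mono_onI q_mono q_nonempty[OF top] q_bdd_below[OF mono bot]) auto
  have qm: "q \<in> borel_measurable (restrict_space borel {0<..<1})"
    by (rule borel_measurable_mono_on_fnc[OF qmono])
  have qm': "q \<in> restrict_space lborel {0<..<1} \<rightarrow>\<^sub>M borel"
    using qm by (simp add: measurable_cong_sets[OF sets_restrict_space_cong[OF sets_lborel] refl])
  let ?\<Omega> = "restrict_space lborel {0<..<1}::real measure"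
  interpret \<Omega>: prob_space ?\<Omega>
    by (auto simp add: emeasure_restrict_space space_restrict_space intro!: prob_spaceI)
  show ?thesis
  proof (intro cdf_unique ext)
    show "real_distribution (distr ?\<Omega> borel q)"
      using qm' by (intro \<Omega>.real_distribution_distr) auto
    show "real_distribution D" by fact
    fix x
    define c where "c = ?C x"
    have c01: "0 \<le> c" "c \<le> 1" unfolding c_def using D.cdf_nonneg D.cdf_bounded_prob by auto
    define A where "A = {t\<in>{0<..<1}. q t \<le> x}"
    have Aeq: "q -` {..x} \<inter> space ?\<Omega> = A" unfolding A_def by (auto simp: space_restrict_space)
    have Asets: "A \<in> sets lborel"
    proof -
      have "q -` {..x} \<inter> space ?\<Omega> \<in> sets ?\<Omega>" using qm' by (intro measurable_sets) auto
      then have "A \<in> sets ?\<Omega>" using Aeq by simp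
      then show ?thesis by (auto simp: sets_restrict_space)
    qed
    have sub1: "{0<..<c} \<subseteq> A"
    proof
      fix t assume t: "t \<in> {0<..<c}"
      then have t01: "t \<in> {0<..<1}" using c01 by auto
      have "q t \<le> x" unfolding q_def
        by (rule q_le) (use t c_def q_bdd_below[OF mono bot] in auto)
      then show "t \<in> A" unfolding A_def using t01 by auto
    qed
    have sub2: "A \<subseteq> {0<..c}"
    proof
      fix t assume t: "t \<in> A"
      then have t01: "t \<in> {0<..<1}" and le: "q t \<le> x" unfolding A_def by auto
      have "t \<le> ?C x" using q_ge[OF mono rc q_nonempty[OF top]] le t01 unfolding q_def by auto
      then show "t \<in> {0<..c}" using t01 unfolding c_def by auto
    qed
    have "emeasure lborel A \<le> emeasure lborel {0<..<1::real}"
      using Asets by (intro emeasure_mono) (auto simp: A_def)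
    then have Afin: "A \<in> fmeasurable lborel" using Asets by (auto simp: fmeasurable_def top.not_eq_extremum le_less_trans)
    have "measure lborel {0<..<c} \<le> measure lborel A"
      using sub1 Afin by (intro measure_mono_fmeasurable) (auto simp: fmeasurable_def)
    moreover have "measure lborel A \<le> measure lborel {0<..c}"
      using sub2 Asets c01 by (intro measure_mono_fmeasurable) (auto simp: fmeasurable_def emeasure_lborel_Ioc)
    ultimately have mA: "measure lborel A = c" using c01 by simp
    have "cdf (distr ?\<Omega> borel q) x = measure ?\<Omega> A"
      unfolding cdf_def using qm' Aeq by (subst measure_distr) auto
    also have "\<dots> = measure lborel A"
      by (subst measure_restrict_space) (auto simp: A_def)
    finally show "cdf (distr ?\<Omega> borel q) x = cdf D x" using mA c_def by simp
  qed
qed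

definition niceQ :: "(real \<Rightarrow> real) \<Rightarrow> real \<Rightarrow> bool" where
  "niceQ Q B \<longleftrightarrow> mono_on {0..<1} Q \<and> (\<forall>t\<in>{0..<1}. \<bar>Q t\<bar> \<le> B) \<and>
     (\<lambda>x. indicator {0..<1} x * Q x) \<in> borel_measurable borel"

definition Hq :: "(real \<Rightarrow> real) \<Rightarrow> real \<Rightarrow> real" where
  "Hq Q u = (\<integral>t. indicator {u<..<1} t * Q t \<partial>lborel)"
definition Sq :: "(real \<Rightarrow> real) \<Rightarrow> real" where
  "Sq Q = (SUP t\<in>{0..<1}. Q t)"
definition aQ :: "(real \<Rightarrow> real) \<Rightarrow> real \<Rightarrow> real" where
  "aQ Q s = real_of_ereal (AQ Q s)"

lemma nice_B: "niceQ Q B \<Longrightarrow> B \<ge> 0"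
proof -
  assume "niceQ Q B"
  then have "\<bar>Q 0\<bar> \<le> B" unfolding niceQ_def by auto
  then show "B \<ge> 0" by linarith
qed

lemma nice_int:
  assumes n: "niceQ Q B" and A: "A \<in> sets borel" and sub: "A \<subseteq> {0..<1}"
  shows "integrable lborel (\<lambda>t. indicator A t * Q t)"
proof -
  have eq: "(\<lambda>t. indicator A t * Q t) = (\<lambda>t. indicator A t * (indicator {0..<1} t * Q t))"
    using sub by (auto simp: indicator_def fun_eq_iff)
  have m1: "(\<lambda>t. indicator {0..<1} t * Q t) \<in> borel_measurable borel" using n unfolding niceQ_def by auto
  have m2: "(\<lambda>t. indicator A t :: real) \<in> borel_measurable borel" using A by simp
  have meas: "(\<lambda>t. indicator A t * Q t) \<in> borel_measurable lborel"
    unfolding eq using borel_measurable_times[OF m2 m1] by simp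
  have "emeasure lborel A \<le> emeasure lborel {0..<1::real}"
    using sub A by (intro emeasure_mono) auto
  then have fin: "emeasure lborel A < \<infinity>" by (auto simp: ennreal_less_top intro: le_less_trans)
  show ?thesis
    by (rule integrableI_bounded_set[of A _ _ B]) (use A meas fin n sub in \<open>auto simp: niceQ_def indicator_def\<close>)
qed

lemma Sq_props:
  assumes n: "niceQ Q B"
  shows "bdd_above (Q ` {0..<1})" "\<And>t. t \<in> {0..<1} \<Longrightarrow> Q t \<le> Sq Q" "Sq Q \<le> B" "- B \<le> Sq Q"
proof -
  have b: "\<forall>t\<in>{0..<1}. \<bar>Q t\<bar> \<le> B" using n unfolding niceQ_def by auto
  show bd: "bdd_above (Q ` {0..<1})" using b by (auto intro!: bdd_aboveI[of _ B] simp: abs_le_iff)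
  show "\<And>t. t \<in> {0..<1} \<Longrightarrow> Q t \<le> Sq Q" unfolding Sq_def using bd by (intro cSUP_upper) auto
  show "Sq Q \<le> B" unfolding Sq_def using b by (intro cSUP_least) (auto simp: abs_le_iff)
  have "Q 0 \<le> Sq Q" unfolding Sq_def using bd by (intro cSUP_upper) auto
  moreover have "\<bar>Q 0\<bar> \<le> B" using b by auto
  ultimately show "- B \<le> Sq Q" by (auto simp: abs_le_iff)
qed

lemma AQ_zero:
  assumes n: "niceQ Q B"
  shows "AQ Q 0 = ereal (Sq Q)"
proof -
  have b: "\<forall>t\<in>{0..<1}. \<bar>Q t\<bar> \<le> B" using n unfolding niceQ_def by auto
  have "(SUP t\<in>{0..<1}. ereal (Q t)) \<le> ereal B"
    using b by (intro SUP_least) (auto simp: abs_le_iff)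
  moreover have "ereal (Q 0) \<le> (SUP t\<in>{0..<1}. ereal (Q t))" by (intro SUP_upper) auto
  ultimately have "\<bar>SUP t\<in>{0..<1}. ereal (Q t)\<bar> \<noteq> \<infinity>" by auto
  then show ?thesis unfolding AQ_def Sq_def by (simp add: ereal_SUP)
qed

lemma AQ_pos:
  assumes s: "0 < s" "s \<le> 1"
  shows "AQ Q s = ereal ((1 / s) * Hq Q (1 - s))"
proof -
  have "(LBINT t=ereal (1 - s)..1. Q t) = (LINT t:einterval (ereal (1 - s)) 1|lborel. Q t)"
    using s by (intro interval_lebesgue_integral_le_eq) auto
  also have "einterval (ereal (1 - s)) 1 = {1-s<..<1}" by (auto simp: einterval_def)
  also have "(LINT t:{1-s<..<1}|lborel. Q t) = Hq Q (1 - s)" unfolding Hq_def set_lebesgue_integral_def by simp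
  finally show ?thesis unfolding AQ_def using s by simp
qed

lemma Hq_lip:
  assumes n: "niceQ Q B" and uv: "0 \<le> u" "u \<le> v" "v \<le> 1"
  shows "\<bar>Hq Q u - Hq Q v\<bar> \<le> B * (v - u)"
proof -
  have iu: "integrable lborel (\<lambda>t. indicator {u<..<1} t * Q t)" using uv by (intro nice_int[OF n]) auto
  have iv: "integrable lborel (\<lambda>t. indicator {v<..<1} t * Q t)" using uv by (intro nice_int[OF n]) auto
  have ib: "integrable lborel (\<lambda>t. B * indicator {u..v} t)"
    using uv by (intro integrable_mult_right integrable_real_indicator) (auto simp: emeasure_lborel_Icc)
  have b: "\<forall>t\<in>{0..<1}. \<bar>Q t\<bar> \<le> B" using n unfolding niceQ_def by auto
  have "\<bar>Hq Q u - Hq Q v\<bar> = \<bar>\<integral>t. indicator {u<..<1} t * Q t - indicator {v<..<1} t * Q t \<partial>lborel\<bar>"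
    unfolding Hq_def using iu iv by simp
  also have "\<dots> \<le> (\<integral>t. \<bar>indicator {u<..<1} t * Q t - indicator {v<..<1} t * Q t\<bar> \<partial>lborel)"
    by (rule integral_abs_bound)
  also have "\<dots> \<le> (\<integral>t. B * indicator {u..v} t \<partial>lborel)"
  proof (rule integral_mono)
    show "integrable lborel (\<lambda>t. \<bar>indicator {u<..<1} t * Q t - indicator {v<..<1} t * Q t\<bar>)"
      using iu iv by auto
    show "integrable lborel (\<lambda>t. B * indicator {u..v} t)" by fact
    fix t :: real
    show "\<bar>indicator {u<..<1} t * Q t - indicator {v<..<1} t * Q t\<bar> \<le> B * indicator {u..v} t"
      using b uv nice_B[OF n] by (auto simp: indicator_def)
  qed
  also have "\<dots> = B * (v - u)" using uv by simp
  finally show ?thesis .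
qed

lemma Hq_cont:
  assumes n: "niceQ Q B"
  shows "continuous_on {0..1} (Hq Q)"
  unfolding continuous_on_iff
proof (intro ballI allI impI)
  fix x e :: real assume x: "x \<in> {0..1}" and e: "0 < e"
  have B0: "B \<ge> 0" using nice_B[OF n] .
  define d where "d = e / (B + 1)"
  have d: "d > 0" unfolding d_def using e B0 by auto
  have "\<forall>x'\<in>{0..1}. dist x' x < d \<longrightarrow> dist (Hq Q x') (Hq Q x) < e"
  proof (intro ballI impI)
    fix x' assume x': "x' \<in> {0..1}" and dd: "dist x' x < d"
    have "\<bar>Hq Q x' - Hq Q x\<bar> \<le> B * \<bar>x' - x\<bar>"
    proof (cases "x' \<le> x")
      case True then show ?thesis using Hq_lip[OF n, of x' x] x x' by auto
    next
      case False then show ?thesis using Hq_lip[OF n, of x x'] x x' by (auto simp: abs_minus_commute)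
    qed
    also have "\<dots> \<le> B * d" using dd B0 by (intro mult_left_mono) (auto simp: dist_real_def)
    also have "\<dots> < e" unfolding d_def using e B0 by (simp add: field_simps)
    finally show "dist (Hq Q x') (Hq Q x) < e" by (simp add: dist_real_def)
  qed
  then show "\<exists>d>0. \<forall>x'\<in>{0..1}. dist x' x < d \<longrightarrow> dist (Hq Q x') (Hq Q x) < e" using d by blast
qed

lemma Hq_bounds:
  assumes n: "niceQ Q B" and s: "0 < s" "s \<le> 1"
  shows "s * Q (1 - s) \<le> Hq Q (1 - s)" "Hq Q (1 - s) \<le> s * Sq Q"
proof -
  have i: "integrable lborel (\<lambda>t. indicator {1-s<..<1} t * Q t)" using s by (intro nice_int[OF n]) auto
  have ic: "integrable lborel (\<lambda>t. indicator {1-s<..<1} t * c)" for c :: real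
    using s by (intro integrable_mult_left integrable_real_indicator) (auto simp: emeasure_lborel_Ioo)
  have mono: "mono_on {0..<1} Q" using n unfolding niceQ_def by auto
  have meas: "(\<integral>t. indicator {1-s<..<1} t * c \<partial>lborel) = s * c" for c :: real
    using s by (simp add: integral_mult_left_zero)
  have "(\<integral>t. indicator {1-s<..<1} t * Q (1 - s) \<partial>lborel) \<le> Hq Q (1 - s)"
    unfolding Hq_def
  proof (rule integral_mono[OF ic i])
    fix t :: real show "indicator {1-s<..<1} t * Q (1 - s) \<le> indicator {1-s<..<1} t * Q t"
      using s by (auto simp: indicator_def intro!: mono_onD[OF mono])
  qed
  then show "s * Q (1 - s) \<le> Hq Q (1 - s)" using meas[of "Q (1 - s)"] by linarith
  have "Hq Q (1 - s) \<le> (\<integral>t. indicator {1-s<..<1} t * Sq Q \<partial>lborel)"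
    unfolding Hq_def
  proof (rule integral_mono[OF i ic])
    fix t :: real show "indicator {1-s<..<1} t * Q t \<le> indicator {1-s<..<1} t * Sq Q"
      using s Sq_props(2)[OF n, of t] by (auto simp: indicator_def)
  qed
  then show "Hq Q (1 - s) \<le> s * Sq Q" using meas[of "Sq Q"] by linarith
qed

lemma aQ_zero: "niceQ Q B \<Longrightarrow> aQ Q 0 = Sq Q"
  unfolding aQ_def using AQ_zero by simp

lemma aQ_pos: "0 < s \<Longrightarrow> s \<le> 1 \<Longrightarrow> aQ Q s = Hq Q (1 - s) / s"
  unfolding aQ_def using AQ_pos by simp

lemma AQ_eq: "niceQ Q B \<Longrightarrow> s \<in> {0..1} \<Longrightarrow> AQ Q s = ereal (aQ Q s)"
  unfolding aQ_def using AQ_zero[of Q B] AQ_pos[of s Q] by (cases "s = 0") auto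

lemma aQ_bound:
  assumes n: "niceQ Q B" and s: "s \<in> {0..1}"
  shows "\<bar>aQ Q s\<bar> \<le> B"
proof (cases "s = 0")
  case True then show ?thesis using aQ_zero[OF n] Sq_props[OF n] by auto
next
  case False
  then have s': "0 < s" "s \<le> 1" using s by auto
  have b: "\<bar>Q (1 - s)\<bar> \<le> B" using n s' unfolding niceQ_def by auto
  have "s * (- B) \<le> s * Q (1 - s)" using b s' by (intro mult_left_mono) auto
  then have "s * (- B) \<le> Hq Q (1 - s)" using Hq_bounds(1)[OF n s'] by linarith
  moreover have "s * Sq Q \<le> s * B" using Sq_props(3)[OF n] s' by (intro mult_left_mono) auto
  then have "Hq Q (1 - s) \<le> s * B" using Hq_bounds(2)[OF n s'] by linarith
  ultimately have "- B \<le> Hq Q (1 - s) / s" "Hq Q (1 - s) / s \<le> B" using s'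
    by (simp_all add: field_simps)
  then show ?thesis using aQ_pos[OF s'] by auto
qed

lemmas aQ_vals = aQ_zero aQ_pos AQ_eq aQ_bound

lemma aQ_lim0:
  assumes n: "niceQ Q B"
  shows "(aQ Q \<longlongrightarrow> Sq Q) (at_right 0)"
proof (rule order_tendstoI)
  fix a assume a: "a > Sq Q"
  have "eventually (\<lambda>s. s \<in> {0<..<1}) (at_right (0::real))"
    by (simp add: eventually_at_right_field) (auto intro!: exI[of _ 1])
  then show "eventually (\<lambda>s. aQ Q s < a) (at_right 0)"
  proof eventually_elim
    case (elim s)
    then have "aQ Q s = Hq Q (1 - s) / s" using aQ_pos by auto
    also have "\<dots> \<le> Sq Q" using Hq_bounds(2)[OF n, of s] elim by (simp add: divide_le_eq mult.commute)
    finally show ?case using a by simp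
  qed
next
  fix a assume a: "a < Sq Q"
  obtain t0 where t0: "t0 \<in> {0..<1}" "a < Q t0"
    using a less_cSUP_iff[of "{0..<1}" Q a] Sq_props(1)[OF n] unfolding Sq_def by auto
  have mono: "mono_on {0..<1} Q" using n unfolding niceQ_def by auto
  have "eventually (\<lambda>s. s \<in> {0<..<1 - t0}) (at_right (0::real))"
    using t0 by (simp add: eventually_at_right_field) (auto intro!: exI[of _ "1 - t0"])
  then show "eventually (\<lambda>s. a < aQ Q s) (at_right 0)"
  proof eventually_elim
    case (elim s)
    then have s: "0 < s" "s \<le> 1" using t0 by auto
    have "Q t0 \<le> Q (1 - s)" using elim t0 by (intro mono_onD[OF mono]) auto
    then have "a < Q (1 - s)" using t0 by simp
    also have "Q (1 - s) \<le> Hq Q (1 - s) / s" using Hq_bounds(1)[OF n s] s by (simp add: le_divide_eq mult.commute)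
    finally show ?case using aQ_pos[OF s] by simp
  qed
qed

lemma aQ_cont:
  assumes n: "niceQ Q B"
  shows "continuous_on {0..1} (aQ Q)"
proof -
  have c1: "continuous_on {0<..1} (\<lambda>s. Hq Q (1 - s) / s)"
  proof (intro continuous_on_divide)
    show "continuous_on {0<..1} (\<lambda>s. Hq Q (1 - s))"
      by (rule continuous_on_compose2[OF Hq_cont[OF n]]) (auto intro!: continuous_intros)
  qed (auto intro!: continuous_intros)
  have c2: "continuous_on {0<..1} (aQ Q)"
    by (rule continuous_on_eq[OF c1]) (auto simp: aQ_pos)
  show ?thesis
    unfolding continuous_on_eq_continuous_within
  proof
    fix x :: real assume x: "x \<in> {0..1}"
    show "continuous (at x within {0..1}) (aQ Q)"
    proof (cases "x = 0")
      case True
      have "at (0::real) within {0..1} = at_right 0" by (rule at_within_Icc_at_right) auto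
      then show ?thesis using True aQ_lim0[OF n] aQ_zero[OF n] by (simp add: continuous_within)
    next
      case False
      then have xp: "x > 0" using x by auto
      have "at x within {0..1} = at x within {0<..1}"
        by (rule at_within_nhd[of _ "{0<..}"]) (use xp in auto)
      moreover have "continuous (at x within {0<..1}) (aQ Q)"
        using c2 x xp by (auto simp: continuous_on_eq_continuous_within)
      ultimately show ?thesis by simp
    qed
  qed
qed

lemma nice_lin:
  assumes n1: "niceQ Q1 B1" and n2: "niceQ Q2 B2" and c: "c1 \<ge> 0" "c2 \<ge> 0"
  shows "niceQ (\<lambda>t. c1 * Q1 t + c2 * Q2 t) (c1 * B1 + c2 * B2)"
    "\<And>s. s \<in> {0..1} \<Longrightarrow> aQ (\<lambda>t. c1 * Q1 t + c2 * Q2 t) s = c1 * aQ Q1 s + c2 * aQ Q2 s"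
proof -
  define Q where "Q = (\<lambda>t. c1 * Q1 t + c2 * Q2 t)"
  have m1: "mono_on {0..<1} Q1" and m2: "mono_on {0..<1} Q2" using n1 n2 unfolding niceQ_def by auto
  have "mono_on {0..<1} Q" unfolding Q_def
    by (intro mono_onI add_mono mult_left_mono mono_onD[OF m1] mono_onD[OF m2]) (use c in auto)
  moreover have "\<forall>t\<in>{0..<1}. \<bar>Q t\<bar> \<le> c1 * B1 + c2 * B2"
  proof
    fix t :: real assume t: "t \<in> {0..<1}"
    have "\<bar>Q t\<bar> \<le> \<bar>c1 * Q1 t\<bar> + \<bar>c2 * Q2 t\<bar>" unfolding Q_def by (rule abs_triangle_ineq)
    also have "\<dots> = c1 * \<bar>Q1 t\<bar> + c2 * \<bar>Q2 t\<bar>" using c by (simp add: abs_mult)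
    also have "\<dots> \<le> c1 * B1 + c2 * B2"
      using t n1 n2 c unfolding niceQ_def by (intro add_mono mult_left_mono) auto
    finally show "\<bar>Q t\<bar> \<le> c1 * B1 + c2 * B2" .
  qed
  moreover have "(\<lambda>x. indicator {0..<1} x * Q x) \<in> borel_measurable borel"
  proof -
    have "(\<lambda>x. indicator {0..<1} x * Q x) = (\<lambda>x. c1 * (indicator {0..<1} x * Q1 x) + c2 * (indicator {0..<1} x * Q2 x))"
      unfolding Q_def by (auto simp: fun_eq_iff algebra_simps)
    moreover have h1: "(\<lambda>x. indicator {0..<1} x * Q1 x) \<in> borel_measurable borel"
      and h2: "(\<lambda>x. indicator {0..<1} x * Q2 x) \<in> borel_measurable borel"
      using n1 n2 unfolding niceQ_def by auto
    note borel_measurable_add[OF borel_measurable_times[OF borel_measurable_const h1]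
        borel_measurable_times[OF borel_measurable_const h2]]
    ultimately show ?thesis by simp
  qed
  ultimately have nQ: "niceQ Q (c1 * B1 + c2 * B2)" unfolding niceQ_def by auto
  then show "niceQ (\<lambda>t. c1 * Q1 t + c2 * Q2 t) (c1 * B1 + c2 * B2)" by (simp add: Q_def)
  have pos: "aQ Q s = c1 * aQ Q1 s + c2 * aQ Q2 s" if s: "0 < s" "s \<le> 1" for s
  proof -
    have i1: "integrable lborel (\<lambda>t. indicator {1-s<..<1} t * Q1 t)" using s by (intro nice_int[OF n1]) auto
    have i2: "integrable lborel (\<lambda>t. indicator {1-s<..<1} t * Q2 t)" using s by (intro nice_int[OF n2]) auto
    have "Hq Q (1 - s) = c1 * Hq Q1 (1 - s) + c2 * Hq Q2 (1 - s)"
    proof -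
      have "Hq Q (1 - s) = (\<integral>t. c1 * (indicator {1-s<..<1} t * Q1 t) + c2 * (indicator {1-s<..<1} t * Q2 t) \<partial>lborel)"
        unfolding Hq_def Q_def by (simp add: algebra_simps)
      also have "\<dots> = c1 * Hq Q1 (1 - s) + c2 * Hq Q2 (1 - s)"
        unfolding Hq_def using i1 i2 by simp
      finally show ?thesis .
    qed
    then show ?thesis using aQ_pos[OF s] aQ_pos[OF s] aQ_pos[OF s]
      by (simp add: add_divide_distrib)
  qed
  have "aQ Q 0 = c1 * aQ Q1 0 + c2 * aQ Q2 0"
  proof -
    have l1: "(aQ Q \<longlongrightarrow> aQ Q 0) (at_right 0)" using aQ_lim0[OF nQ] aQ_zero[OF nQ] by simp
    have "((\<lambda>s. c1 * aQ Q1 s + c2 * aQ Q2 s) \<longlongrightarrow> c1 * aQ Q1 0 + c2 * aQ Q2 0) (at_right 0)"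
      using aQ_lim0[OF n1] aQ_lim0[OF n2] aQ_zero[OF n1] aQ_zero[OF n2]
      by (auto intro!: tendsto_intros)
    moreover have "eventually (\<lambda>s. c1 * aQ Q1 s + c2 * aQ Q2 s = aQ Q s) (at_right (0::real))"
    proof -
      have "eventually (\<lambda>s. s \<in> {0<..<1}) (at_right (0::real))"
        by (simp add: eventually_at_right_field) (auto intro!: exI[of _ 1])
      then show ?thesis by eventually_elim (use pos in auto)
    qed
    ultimately have l2: "(aQ Q \<longlongrightarrow> c1 * aQ Q1 0 + c2 * aQ Q2 0) (at_right 0)"
      by (rule Lim_transform_eventually)
    show ?thesis using tendsto_unique[OF trivial_limit_at_right_real l1 l2] .
  qed
  then show "\<And>s. s \<in> {0..1} \<Longrightarrow> aQ (\<lambda>t. c1 * Q1 t + c2 * Q2 t) s = c1 * aQ Q1 s + c2 * aQ Q2 s"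
    using pos unfolding Q_def[symmetric] by (case_tac "s = 0") auto
qed

lemma EI_cong_AE:
  assumes "AE x in m. f x = g x"
  shows "ereal_integral m f = ereal_integral m g"
proof -
  have "AE x in m. e2ennreal (f x) = e2ennreal (g x)" using assms by eventually_elim auto
  moreover have "AE x in m. e2ennreal (- f x) = e2ennreal (- g x)" using assms by eventually_elim auto
  ultimately show ?thesis unfolding ereal_integral_def by (simp add: nn_integral_cong_AE)
qed

lemma EI_real:
  fixes h :: "'b \<Rightarrow> real"
  assumes i: "integrable m h"
  shows "ereal_integral m (\<lambda>x. ereal (h x)) = ereal (\<integral>x. h x \<partial>m)"
proof -
  have ip: "integrable m (\<lambda>x. max 0 (h x))" and ineg: "integrable m (\<lambda>x. max 0 (- h x))" using i by auto
  have e1: "(\<integral>\<^sup>+x. e2ennreal (ereal (h x)) \<partial>m) = ennreal (\<integral>x. max 0 (h x) \<partial>m)"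
  proof -
    have "(\<integral>\<^sup>+x. e2ennreal (ereal (h x)) \<partial>m) = (\<integral>\<^sup>+x. ennreal (max 0 (h x)) \<partial>m)"
      by (intro nn_integral_cong) (auto simp: e2ennreal_ereal max_def ennreal_neg)
    also have "\<dots> = ennreal (\<integral>x. max 0 (h x) \<partial>m)" using ip by (intro nn_integral_eq_integral) auto
    finally show ?thesis .
  qed
  have e2: "(\<integral>\<^sup>+x. e2ennreal (- ereal (h x)) \<partial>m) = ennreal (\<integral>x. max 0 (- h x) \<partial>m)"
  proof -
    have "(\<integral>\<^sup>+x. e2ennreal (- ereal (h x)) \<partial>m) = (\<integral>\<^sup>+x. ennreal (max 0 (- h x)) \<partial>m)"
      by (intro nn_integral_cong) (auto simp: e2ennreal_ereal max_def ennreal_neg)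
    also have "\<dots> = ennreal (\<integral>x. max 0 (- h x) \<partial>m)" using ineg by (intro nn_integral_eq_integral) auto
    finally show ?thesis .
  qed
  have p1: "(\<integral>x. max 0 (h x) \<partial>m) \<ge> 0" "(\<integral>x. max 0 (- h x) \<partial>m) \<ge> 0" by auto
  have "(\<integral>x. h x \<partial>m) = (\<integral>x. max 0 (h x) - max 0 (- h x) \<partial>m)"
    by (intro Bochner_Integration.integral_cong) auto
  also have "\<dots> = (\<integral>x. max 0 (h x) \<partial>m) - (\<integral>x. max 0 (- h x) \<partial>m)" using ip ineg by simp
  finally have "(\<integral>x. h x \<partial>m) = (\<integral>x. max 0 (h x) \<partial>m) - (\<integral>x. max 0 (- h x) \<partial>m)" .
  then show ?thesis unfolding ereal_integral_def e1 e2 using p1 by (simp add: enn2ereal_ennreal)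
qed

lemma EI_nice:
  assumes n: "niceQ Q B" and m: "m \<in> M1Set"
  shows "ereal_integral m (\<lambda>s. if s \<in> {0..1} then AQ Q s else 0) = ereal (Lf (aQ Q) m)"
proof -
  have "AE s in m. (if s \<in> {0..1} then AQ Q s else 0) = ereal (aQ Q (clip s))"
    using M1SetD(4)[OF m] by eventually_elim (auto simp: clip_id AQ_eq[OF n])
  then have "ereal_integral m (\<lambda>s. if s \<in> {0..1} then AQ Q s else 0) = ereal_integral m (\<lambda>s. ereal (aQ Q (clip s)))"
    by (rule EI_cong_AE)
  also have "\<dots> = ereal (Lf (aQ Q) m)" unfolding Lf_def
    by (rule EI_real) (rule contg_integrable[OF aQ_cont[OF n] m])
  finally show ?thesis .
qed

lemma quantile_rho:
  assumes P: "prob_space P" and X: "X \<in> borel_measurable P" and i2: "integrable P (\<lambda>\<omega>. (X \<omega>)\<^sup>2)"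
  shows "integrable lborel (\<lambda>s. indicator {0<..<1} s * (quantile P X (1 - s))\<^sup>2)"
    "(\<lambda>s. indicator {0<..<1} s * quantile P X (1 - s)) \<in> borel_measurable borel"
proof -
  interpret P: prob_space P by fact
  define D where "D = distr P borel X"
  have D: "real_distribution D" unfolding D_def using X by (intro P.real_distribution_distr) auto
  interpret D: real_distribution D by fact
  define q where "q = (\<lambda>t. Inf {y. cdf D y > t})"
  have qeq: "quantile P X = q" unfolding q_def D_def using quantile_cdf[OF P X] by (auto simp: fun_eq_iff)
  have mono: "mono (cdf D)" by (auto intro: monoI D.cdf_nondecreasing)
  have qmono: "mono_on {0<..<1} q" unfolding q_def
    by (intro mono_onI q_mono q_nonempty[OF D.cdf_lim_at_top_prob] q_bdd_below[OF mono D.cdf_lim_at_bot]) auto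
  have qm: "q \<in> borel_measurable (restrict_space borel {0<..<1})"
    by (rule borel_measurable_mono_on_fnc[OF qmono])
  have qm': "q \<in> restrict_space lborel {0<..<1} \<rightarrow>\<^sub>M borel"
    using qm by (simp add: measurable_cong_sets[OF sets_restrict_space_cong[OF sets_lborel] refl])
  have gm: "(\<lambda>x. indicator {0<..<1} x * q x) \<in> borel_measurable borel"
    using qm by (subst (asm) borel_measurable_restrict_space_iff) auto
  have dq: "distr (restrict_space lborel {0<..<1::real}) borel q = D"
    unfolding q_def by (rule distr_quantile[OF D])
  have "integrable D (\<lambda>x. x\<^sup>2)" unfolding D_def using X i2 by (subst integrable_distr_eq) auto
  then have "integrable (distr (restrict_space lborel {0<..<1::real}) borel q) (\<lambda>x. x\<^sup>2)" using dq by simp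
  then have "integrable (restrict_space lborel {0<..<1::real}) (\<lambda>t. (q t)\<^sup>2)"
    using qm' by (subst (asm) integrable_distr_eq) auto
  then have i: "integrable lborel (\<lambda>t. indicator {0<..<1} t * (q t)\<^sup>2)"
    by (subst (asm) integrable_restrict_space) auto
  have "integrable lborel (\<lambda>s. (\<lambda>t. indicator {0<..<1} t * (q t)\<^sup>2) (1 + (-1) * s))"
    by (rule lborel_integrable_real_affine[OF i]) auto
  moreover have "(\<lambda>s. (\<lambda>t. indicator {0<..<1} t * (q t)\<^sup>2) (1 + (-1) * s)) =
      (\<lambda>s. indicator {0<..<1} s * (q (1 - s))\<^sup>2)"
    by (auto simp: fun_eq_iff indicator_def)
  ultimately show "integrable lborel (\<lambda>s. indicator {0<..<1} s * (quantile P X (1 - s))\<^sup>2)"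
    unfolding qeq by simp
  have "(\<lambda>s. (\<lambda>x. indicator {0<..<1} x * q x) (1 - s)) \<in> borel_measurable borel"
    by (rule measurable_compose[OF _ gm]) (intro borel_measurable_continuous_onI continuous_intros)
  moreover have "(\<lambda>s. (\<lambda>x. indicator {0<..<1} x * q x) (1 - s)) = (\<lambda>s. indicator {0<..<1} s * q (1 - s))"
    by (auto simp: fun_eq_iff indicator_def)
  ultimately show "(\<lambda>s. indicator {0<..<1} s * quantile P X (1 - s)) \<in> borel_measurable borel"
    unfolding qeq by simp
qed

lemma quantile_X0_nice:
  assumes P: "prob_space P" and X: "X \<in> borel_measurable P" and b: "AE \<omega> in P. \<bar>X \<omega>\<bar> \<le> C0"
  shows "niceQ (quantile P X) C0"
proof -
  interpret P: prob_space P by fact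
  define F where "F = (\<lambda>y. measure P {\<omega>\<in>space P. X \<omega> \<le> y})"
  have qd: "quantile P X t = Inf {y. F y > t}" for t unfolding quantile_def F_def by simp
  have sets: "{\<omega>\<in>space P. X \<omega> \<le> y} \<in> sets P" for y using X by measurable
  have F1: "F y = 1" if "y \<ge> C0" for y
  proof -
    have "AE \<omega> in P. X \<omega> \<le> y" using b by eventually_elim (use that in auto)
    then show ?thesis unfolding F_def using P.prob_Collect_eq_1[OF sets] by simp
  qed
  have F0: "F y = 0" if "y < - C0" for y
  proof -
    have "AE \<omega> in P. \<not> X \<omega> \<le> y" using b by eventually_elim (use that in auto)
    then show ?thesis unfolding F_def using P.prob_Collect_eq_0[OF sets] by simp
  qed
  have ne: "C0 \<in> {y. F y > t}" if "t < 1" for t using F1[of C0] that by auto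
  have lb: "\<forall>y\<in>{y. F y > t}. - C0 \<le> y" if "t \<ge> 0" for t
  proof
    fix y assume "y \<in> {y. F y > t}"
    then show "- C0 \<le> y" using F0[of y] that by (cases "y < - C0") auto
  qed
  have bd: "bdd_below {y. F y > t}" if "t \<ge> 0" for t using lb[OF that] by (auto intro: bdd_belowI)
  have up: "quantile P X t \<le> C0" if "t \<in> {0..<1}" for t
    unfolding qd using that ne bd by (intro cInf_lower) auto
  have lo: "- C0 \<le> quantile P X t" if "t \<in> {0..<1}" for t
    unfolding qd using that ne lb by (intro cInf_greatest) auto
  have mono: "mono_on {0..<1} (quantile P X)"
  proof (intro mono_onI)
    fix r s :: real assume r: "r \<in> {0..<1}" and s: "s \<in> {0..<1}" and rs: "r \<le> s"
    show "quantile P X r \<le> quantile P X s" unfolding qd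
      by (rule cInf_superset_mono) (use ne[of s] bd[of r] r s rs in auto)
  qed
  have "quantile P X \<in> borel_measurable (restrict_space borel {0..<1})"
    by (rule borel_measurable_mono_on_fnc[OF mono])
  then have "(\<lambda>x. indicator {0..<1} x * quantile P X x) \<in> borel_measurable borel"
    by (subst (asm) borel_measurable_restrict_space_iff) auto
  moreover have "\<forall>t\<in>{0..<1}. \<bar>quantile P X t\<bar> \<le> C0"
  proof
    fix t :: real assume t: "t \<in> {0..<1}"
    show "\<bar>quantile P X t\<bar> \<le> C0" using up[OF t] lo[OF t] by linarith
  qed
  ultimately show ?thesis unfolding niceQ_def using mono by auto
qed

abbreviation W :: "real \<Rightarrow> real" where "W \<equiv> indicator {0<..<1}"

definition L2W :: "(real \<Rightarrow> real) \<Rightarrow> bool" where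
  "L2W f \<longleftrightarrow> (\<lambda>s. W s * f s) \<in> borel_measurable borel \<and> integrable lborel (\<lambda>s. W s * (f s)\<^sup>2)"

definition Jf :: "'a measure \<Rightarrow> ('a \<Rightarrow> real) \<Rightarrow> real \<Rightarrow> real \<Rightarrow> (real \<Rightarrow> real) \<Rightarrow> real" where
  "Jf P \<rho> \<beta> lam Q = (LBINT s=0..1. (Q s - \<beta>)\<^sup>2) + lam * (LBINT s=0..1. Q s * quantile P \<rho> (1 - s))"

lemma LBINT01: "(LBINT s=0..1. f s) = (\<integral>s. W s * f s \<partial>lborel)"
proof -
  have "(LBINT s=0..1. f s) = (LINT s:einterval 0 1|lborel. f s)"
    by (rule interval_lebesgue_integral_le_eq) simp
  also have "einterval 0 1 = {0<..<1::real}" by (auto simp: einterval_def)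
  finally show ?thesis unfolding set_lebesgue_integral_def by simp
qed

lemma W_sq: "W s * W s = W s" by (auto simp: indicator_def)

lemma L2W_QSet:
  assumes "Q \<in> QSet" shows "L2W Q"
proof -
  have m: "(\<lambda>x. indicator {0..<1} x * Q x) \<in> borel_measurable borel"
    and i: "integrable lborel (\<lambda>x. indicator {0..<1} x * (Q x)\<^sup>2)"
    using assms unfolding QSet_def set_borel_measurable_def set_integrable_def by auto
  have eq: "(\<lambda>s. W s * Q s) = (\<lambda>s. W s * (indicator {0..<1} s * Q s))"
    by (auto simp: fun_eq_iff indicator_def)
  have m2: "(\<lambda>s. W s * Q s) \<in> borel_measurable borel" unfolding eq using m by simp
  have "integrable lborel (\<lambda>s. W s * (Q s)\<^sup>2)"
  proof (rule Bochner_Integration.integrable_bound[OF i])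
    have "(\<lambda>s. W s * (Q s)\<^sup>2) = (\<lambda>s. (W s * Q s) * (W s * Q s))"
      by (auto simp: fun_eq_iff indicator_def power2_eq_square)
    then show "(\<lambda>s. W s * (Q s)\<^sup>2) \<in> borel_measurable lborel" using m2 by simp
    show "AE x in lborel. norm (W x * (Q x)\<^sup>2) \<le> norm (indicator {0..<1} x * (Q x)\<^sup>2)"
      by (auto simp: indicator_def)
  qed
  then show ?thesis unfolding L2W_def using m2 by simp
qed

lemma L2W_meas_sq: "L2W f \<Longrightarrow> (\<lambda>s. W s * (f s * g s)) = (\<lambda>s. (W s * f s) * (W s * g s))"
  by (auto simp: fun_eq_iff indicator_def)

lemma L2W_prod:
  assumes f: "L2W f" and g: "L2W g"
  shows "integrable lborel (\<lambda>s. W s * (f s * g s))"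
proof -
  have i: "integrable lborel (\<lambda>s. W s * (f s)\<^sup>2 + W s * (g s)\<^sup>2)" using f g unfolding L2W_def by auto
  show ?thesis
  proof (rule Bochner_Integration.integrable_bound[OF i])
    have "(\<lambda>s. (W s * f s) * (W s * g s)) \<in> borel_measurable borel" using f g unfolding L2W_def by auto
    then show "(\<lambda>s. W s * (f s * g s)) \<in> borel_measurable lborel" by (simp add: L2W_meas_sq[OF f])
    show "AE x in lborel. norm (W x * (f x * g x)) \<le> norm (W x * (f x)\<^sup>2 + W x * (g x)\<^sup>2)"
    proof (rule AE_I2)
      fix x
      have "2 * \<bar>f x * g x\<bar> \<le> (f x)\<^sup>2 + (g x)\<^sup>2"
        using sum_squares_bound[of "\<bar>f x\<bar>" "\<bar>g x\<bar>"] by (simp add: abs_mult power2_abs)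
      then have "\<bar>f x * g x\<bar> \<le> (f x)\<^sup>2 + (g x)\<^sup>2" by (smt (verit) zero_le_power2)
      then show "norm (W x * (f x * g x)) \<le> norm (W x * (f x)\<^sup>2 + W x * (g x)\<^sup>2)"
        by (auto simp: indicator_def)
    qed
  qed
qed

lemma L2W_const: "L2W (\<lambda>_. c)"
proof -
  have i: "integrable lborel (\<lambda>s. W s * d)" for d :: real
    by (intro integrable_mult_left integrable_real_indicator) (auto simp: emeasure_lborel_Ioo)
  show ?thesis unfolding L2W_def using i[of "c\<^sup>2"] by (auto intro!: borel_measurable_times)
qed

lemma L2W_lin:
  assumes f: "L2W f" and g: "L2W g"
  shows "L2W (\<lambda>s. a * f s + b * g s)"
proof -
  have m: "(\<lambda>s. W s * (a * f s + b * g s)) \<in> borel_measurable borel"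
  proof -
    have "(\<lambda>s. W s * (a * f s + b * g s)) = (\<lambda>s. a * (W s * f s) + b * (W s * g s))"
      by (auto simp: fun_eq_iff algebra_simps)
    then show ?thesis using f g unfolding L2W_def by auto
  qed
  have "integrable lborel (\<lambda>s. W s * (a * f s + b * g s)\<^sup>2)"
  proof -
    have "(\<lambda>s. W s * (a * f s + b * g s)\<^sup>2) = (\<lambda>s. a\<^sup>2 * (W s * (f s)\<^sup>2) + 2 * a * b * (W s * (f s * g s)) + b\<^sup>2 * (W s * (g s)\<^sup>2))"
      by (auto simp: fun_eq_iff algebra_simps power2_eq_square)
    then show ?thesis using f g L2W_prod[OF f g] unfolding L2W_def by auto
  qed
  then show ?thesis unfolding L2W_def using m by auto
qed

lemma L2W_int: "L2W f \<Longrightarrow> integrable lborel (\<lambda>s. W s * f s)"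
  using L2W_prod[of f "\<lambda>_. 1"] L2W_const by simp

lemma L2W_min:
  assumes f: "L2W f" and N: "N \<ge> 0"
  shows "L2W (\<lambda>s. min (f s) N)"
proof -
  have "(\<lambda>s. W s * min (f s) N) = (\<lambda>s. min (W s * f s) (W s * N))"
    by (auto simp: fun_eq_iff indicator_def)
  moreover have "(\<lambda>s. min (W s * f s) (W s * N)) \<in> borel_measurable borel"
    using f unfolding L2W_def by auto
  ultimately have m: "(\<lambda>s. W s * min (f s) N) \<in> borel_measurable borel" by simp
  have i: "integrable lborel (\<lambda>s. W s * (f s)\<^sup>2 + W s * N\<^sup>2)"
    using f L2W_const[of N] unfolding L2W_def by auto
  have "integrable lborel (\<lambda>s. W s * (min (f s) N)\<^sup>2)"
  proof (rule Bochner_Integration.integrable_bound[OF i])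
    have "(\<lambda>s. W s * (min (f s) N)\<^sup>2) = (\<lambda>s. (W s * min (f s) N) * (W s * min (f s) N))"
      by (auto simp: fun_eq_iff indicator_def power2_eq_square)
    then show "(\<lambda>s. W s * (min (f s) N)\<^sup>2) \<in> borel_measurable lborel" using m by simp
    show "AE x in lborel. norm (W x * (min (f x) N)\<^sup>2) \<le> norm (W x * (f x)\<^sup>2 + W x * N\<^sup>2)"
      by (rule AE_I2) (auto simp: indicator_def min_def power2_eq_square)
  qed
  then show ?thesis unfolding L2W_def using m by auto
qed

lemma Jf_eq:
  "Jf P \<rho> \<beta> lam Q = (\<integral>s. W s * (Q s - \<beta>)\<^sup>2 \<partial>lborel) + lam * (\<integral>s. W s * (Q s * quantile P \<rho> (1 - s)) \<partial>lborel)"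
  unfolding Jf_def LBINT01 by simp

lemma Jf_convex:
  assumes Q1: "L2W Q1" and Q2: "L2W Q2" and q: "L2W (\<lambda>s. quantile P \<rho> (1 - s))" and t: "t \<in> {0..1}"
  shows "Jf P \<rho> \<beta> lam (\<lambda>s. t * Q1 s + (1 - t) * Q2 s) \<le> t * Jf P \<rho> \<beta> lam Q1 + (1 - t) * Jf P \<rho> \<beta> lam Q2"
proof -
  define qt where "qt = (\<lambda>s. quantile P \<rho> (1 - s))"
  have qt: "L2W qt" using q unfolding qt_def .
  have sq: "L2W f \<Longrightarrow> integrable lborel (\<lambda>s. W s * (f s - \<beta>)\<^sup>2)" for f
  proof -
    assume f: "L2W f"
    have "L2W (\<lambda>s. 1 * f s + (- \<beta>) * 1)" by (rule L2W_lin[OF f L2W_const])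
    then show ?thesis unfolding L2W_def by simp
  qed
  have Qb: "L2W (\<lambda>s. t * Q1 s + (1 - t) * Q2 s)" by (rule L2W_lin[OF Q1 Q2])
  define A where "A = (\<lambda>Q. \<integral>s. W s * (Q s - \<beta>)\<^sup>2 \<partial>lborel)"
  define Bq where "Bq = (\<lambda>Q. \<integral>s. W s * (Q s * qt s) \<partial>lborel)"
  have J: "\<And>Q. Jf P \<rho> \<beta> lam Q = A Q + lam * Bq Q" unfolding Jf_eq A_def Bq_def qt_def by simp
  have p1: "A (\<lambda>s. t * Q1 s + (1 - t) * Q2 s) \<le> t * A Q1 + (1 - t) * A Q2"
  proof -
    have "(\<integral>s. W s * (t * Q1 s + (1 - t) * Q2 s - \<beta>)\<^sup>2 \<partial>lborel)
        \<le> (\<integral>s. t * (W s * (Q1 s - \<beta>)\<^sup>2) + (1 - t) * (W s * (Q2 s - \<beta>)\<^sup>2) \<partial>lborel)"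
    proof (rule integral_mono)
      show "integrable lborel (\<lambda>s. W s * (t * Q1 s + (1 - t) * Q2 s - \<beta>)\<^sup>2)" using sq[OF Qb] by simp
      show "integrable lborel (\<lambda>s. t * (W s * (Q1 s - \<beta>)\<^sup>2) + (1 - t) * (W s * (Q2 s - \<beta>)\<^sup>2))"
        using sq[OF Q1] sq[OF Q2] by auto
      fix s :: real
      define a where "a = Q1 s - \<beta>"
      define b where "b = Q2 s - \<beta>"
      have e: "t * Q1 s + (1 - t) * Q2 s - \<beta> = t * a + (1 - t) * b" unfolding a_def b_def by (simp add: algebra_simps)
      have "t * a\<^sup>2 + (1 - t) * b\<^sup>2 - (t * a + (1 - t) * b)\<^sup>2 = t * (1 - t) * (a - b)\<^sup>2"
        by (simp add: power2_eq_square algebra_simps)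
      moreover have "t * (1 - t) * (a - b)\<^sup>2 \<ge> 0" using t by auto
      ultimately have "(t * a + (1 - t) * b)\<^sup>2 \<le> t * a\<^sup>2 + (1 - t) * b\<^sup>2" by linarith
      then show "W s * (t * Q1 s + (1 - t) * Q2 s - \<beta>)\<^sup>2 \<le> t * (W s * (Q1 s - \<beta>)\<^sup>2) + (1 - t) * (W s * (Q2 s - \<beta>)\<^sup>2)"
        unfolding e a_def[symmetric] b_def[symmetric] by (auto simp: indicator_def)
    qed
    also have "\<dots> = t * (\<integral>s. W s * (Q1 s - \<beta>)\<^sup>2 \<partial>lborel) + (1 - t) * (\<integral>s. W s * (Q2 s - \<beta>)\<^sup>2 \<partial>lborel)"
      using sq[OF Q1] sq[OF Q2] by simp
    finally show ?thesis unfolding A_def .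
  qed
  have p2: "Bq (\<lambda>s. t * Q1 s + (1 - t) * Q2 s) = t * Bq Q1 + (1 - t) * Bq Q2"
  proof -
    have "(\<integral>s. W s * ((t * Q1 s + (1 - t) * Q2 s) * qt s) \<partial>lborel)
        = (\<integral>s. t * (W s * (Q1 s * qt s)) + (1 - t) * (W s * (Q2 s * qt s)) \<partial>lborel)"
      by (intro Bochner_Integration.integral_cong) (auto simp: algebra_simps)
    also have "\<dots> = t * (\<integral>s. W s * (Q1 s * qt s) \<partial>lborel) + (1 - t) * (\<integral>s. W s * (Q2 s * qt s) \<partial>lborel)"
      using L2W_prod[OF Q1 qt] L2W_prod[OF Q2 qt] by simp
    finally show ?thesis unfolding Bq_def .
  qed
  have "A (\<lambda>s. t * Q1 s + (1 - t) * Q2 s) + lam * Bq (\<lambda>s. t * Q1 s + (1 - t) * Q2 s)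
      = (t * (A Q1 + lam * Bq Q1) + (1 - t) * (A Q2 + lam * Bq Q2))
        + (A (\<lambda>s. t * Q1 s + (1 - t) * Q2 s) - (t * A Q1 + (1 - t) * A Q2))"
    unfolding p2 by (simp add: algebra_simps)
  then show ?thesis unfolding J using p1 by linarith
qed

lemma Jf_trunc:
  assumes Q: "L2W Q" and q: "L2W (\<lambda>s. quantile P \<rho> (1 - s))"
  shows "(\<lambda>N. Jf P \<rho> \<beta> lam (\<lambda>s. min (Q s) (real N))) \<longlonglongrightarrow> Jf P \<rho> \<beta> lam Q"
proof -
  define qt where "qt = (\<lambda>s. quantile P \<rho> (1 - s))"
  have qt: "L2W qt" using q unfolding qt_def .
  have conv: "\<And>x. (\<lambda>N. min (Q x) (real N)) \<longlonglongrightarrow> Q x"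
  proof -
    fix x
    obtain n :: nat where n: "Q x \<le> real n" using real_arch_simple by blast
    have "eventually (\<lambda>N. min (Q x) (real N) = Q x) sequentially"
      using n by (auto simp: eventually_sequentially intro!: exI[of _ n] order.trans[OF n])
    then show "(\<lambda>N. min (Q x) (real N)) \<longlonglongrightarrow> Q x" by (rule tendsto_eventually)
  qed
  have QN: "\<And>N. L2W (\<lambda>s. min (Q s) (real N))" using L2W_min[OF Q] by auto
  have mQN: "(\<lambda>s. W s * min (Q s) (real N)) \<in> borel_measurable borel" for N using QN unfolding L2W_def by auto
  have mQ: "(\<lambda>s. W s * Q s) \<in> borel_measurable borel" using Q unfolding L2W_def by auto
  have mq: "(\<lambda>s. W s * qt s) \<in> borel_measurable borel" using qt unfolding L2W_def by auto
  have c1: "(\<lambda>N. \<integral>s. W s * (min (Q s) (real N) - \<beta>)\<^sup>2 \<partial>lborel) \<longlonglongrightarrow> (\<integral>s. W s * (Q s - \<beta>)\<^sup>2 \<partial>lborel)"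
  proof (rule integral_dominated_convergence[where w="\<lambda>s. W s * (Q s - \<beta>)\<^sup>2 + W s * \<beta>\<^sup>2"])
    have e: "\<And>g. (\<lambda>s. W s * (g s - \<beta>)\<^sup>2) = (\<lambda>s. (W s * g s - W s * \<beta>) * (W s * g s - W s * \<beta>))"
      by (auto simp: fun_eq_iff indicator_def power2_eq_square)
    show "(\<lambda>s. W s * (Q s - \<beta>)\<^sup>2) \<in> borel_measurable lborel" unfolding e using mQ by simp
    show "(\<lambda>s. W s * (min (Q s) (real N) - \<beta>)\<^sup>2) \<in> borel_measurable lborel" for N
      unfolding e using mQN[of N] by simp
    have "L2W (\<lambda>s. 1 * Q s + (- \<beta>) * 1)" by (rule L2W_lin[OF Q L2W_const])
    then show "integrable lborel (\<lambda>s. W s * (Q s - \<beta>)\<^sup>2 + W s * \<beta>\<^sup>2)"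
      using L2W_const[of \<beta>] unfolding L2W_def by auto
    show "AE x in lborel. (\<lambda>N. W x * (min (Q x) (real N) - \<beta>)\<^sup>2) \<longlonglongrightarrow> W x * (Q x - \<beta>)\<^sup>2"
      by (rule AE_I2) (intro tendsto_intros conv)
    show "AE x in lborel. norm (W x * (min (Q x) (real N) - \<beta>)\<^sup>2) \<le> W x * (Q x - \<beta>)\<^sup>2 + W x * \<beta>\<^sup>2" for N
    proof (rule AE_I2)
      fix x
      have "(min (Q x) (real N) - \<beta>)\<^sup>2 \<le> (Q x - \<beta>)\<^sup>2 + \<beta>\<^sup>2"
      proof (cases "Q x \<le> real N")
        case True then show ?thesis by simp
      next
        case False
        then have m: "min (Q x) (real N) = real N" by simp
        show ?thesis
        proof (cases "real N \<ge> \<beta>")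
          case True
          then have "(real N - \<beta>)\<^sup>2 \<le> (Q x - \<beta>)\<^sup>2" using False by (intro power_mono) auto
          then show ?thesis using m by (smt (verit) zero_le_power2)
        next
          case False
          have "(\<beta> - real N)\<^sup>2 \<le> \<beta>\<^sup>2" by (rule power_mono) (use False in auto)
          then have "(real N - \<beta>)\<^sup>2 \<le> \<beta>\<^sup>2" by (simp add: power2_commute)
          then show ?thesis using m by (smt (verit) zero_le_power2)
        qed
      qed
      then show "norm (W x * (min (Q x) (real N) - \<beta>)\<^sup>2) \<le> W x * (Q x - \<beta>)\<^sup>2 + W x * \<beta>\<^sup>2"
        by (auto simp: indicator_def)
    qed
  qed
  have c2: "(\<lambda>N. \<integral>s. W s * (min (Q s) (real N) * qt s) \<partial>lborel) \<longlonglongrightarrow> (\<integral>s. W s * (Q s * qt s) \<partial>lborel)"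
  proof (rule integral_dominated_convergence[where w="\<lambda>s. \<bar>W s * (Q s * qt s)\<bar>"])
    show "(\<lambda>s. W s * (Q s * qt s)) \<in> borel_measurable lborel"
      using borel_measurable_times[OF mQ mq] by (simp add: L2W_meas_sq[OF Q])
    show "(\<lambda>s. W s * (min (Q s) (real N) * qt s)) \<in> borel_measurable lborel" for N
      using borel_measurable_times[OF mQN[of N] mq] by (simp add: L2W_meas_sq[OF QN[of N]])
    show "integrable lborel (\<lambda>s. \<bar>W s * (Q s * qt s)\<bar>)" using L2W_prod[OF Q qt] by auto
    show "AE x in lborel. (\<lambda>N. W x * (min (Q x) (real N) * qt x)) \<longlonglongrightarrow> W x * (Q x * qt x)"
      by (rule AE_I2) (intro tendsto_intros conv)
    show "AE x in lborel. norm (W x * (min (Q x) (real N) * qt x)) \<le> \<bar>W x * (Q x * qt x)\<bar>" for N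
    proof (rule AE_I2)
      fix x
      have "\<bar>min (Q x) (real N)\<bar> \<le> \<bar>Q x\<bar>" by (auto simp: min_def)
      then have "\<bar>min (Q x) (real N) * qt x\<bar> \<le> \<bar>Q x * qt x\<bar>" by (simp add: abs_mult mult_right_mono)
      then show "norm (W x * (min (Q x) (real N) * qt x)) \<le> \<bar>W x * (Q x * qt x)\<bar>"
        by (auto simp: indicator_def)
    qed
  qed
  show ?thesis unfolding Jf_eq
    by (intro tendsto_intros c1 c2[unfolded qt_def])
qed

lemma e2_shift1:
  fixes h :: ereal and B :: real
  assumes B: "B \<ge> 0" and hb: "h \<ge> - ereal B"
  shows "e2ennreal (h + ereal B) = e2ennreal h + (ennreal B - e2ennreal (- h))"
proof (cases h)
  case (real r)
  then have r: "r \<ge> - B" using hb by auto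
  show ?thesis
  proof (cases "r \<ge> 0")
    case True
    then show ?thesis using real B by (simp add: e2ennreal_ereal ennreal_neg ennreal_plus)
  next
    case False
    then show ?thesis using real B r by (simp add: e2ennreal_ereal ennreal_neg ennreal_minus)
  qed
next
  case PInf then show ?thesis by simp
next
  case MInf then show ?thesis using hb by simp
qed

lemma e2_shift2:
  fixes h :: ereal and B :: real
  assumes B: "B \<ge> 0" and hb: "h \<ge> - ereal B"
  shows "e2ennreal (- h) \<le> ennreal B"
proof (cases h)
  case (real r)
  then have r: "- r \<le> B" using hb by auto
  then show ?thesis using real by (simp add: e2ennreal_ereal ennreal_leI)
next
  case PInf then show ?thesis by (simp add: e2ennreal_neg)
next
  case MInf then show ?thesis using hb by simp
qed

lemmas e2_shift = e2_shift1 e2_shift2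

lemma EI_shift:
  fixes h :: "'b \<Rightarrow> ereal"
  assumes P: "prob_space m" and hm: "h \<in> borel_measurable m" and B: "B \<ge> 0"
    and hb: "\<And>x. h x \<ge> - ereal B"
  shows "ereal_integral m h = enn2ereal (\<integral>\<^sup>+x. e2ennreal (h x + ereal B) \<partial>m) - ereal B"
proof -
  interpret prob_space m by fact
  have pm: "(\<lambda>x. e2ennreal (h x)) \<in> borel_measurable m" using hm measurable_e2ennreal by measurable
  have nm: "(\<lambda>x. e2ennreal (- h x)) \<in> borel_measurable m" using hm measurable_e2ennreal by measurable
  have "(\<integral>\<^sup>+x. e2ennreal (h x + ereal B) \<partial>m) = (\<integral>\<^sup>+x. e2ennreal (h x) + (ennreal B - e2ennreal (- h x)) \<partial>m)"
    using e2_shift(1)[OF B hb] by simp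
  also have "\<dots> = (\<integral>\<^sup>+x. e2ennreal (h x) \<partial>m) + (\<integral>\<^sup>+x. ennreal B - e2ennreal (- h x) \<partial>m)"
    using pm nm by (intro nn_integral_add) auto
  also have "(\<integral>\<^sup>+x. ennreal B - e2ennreal (- h x) \<partial>m) = (\<integral>\<^sup>+x. ennreal B \<partial>m) - (\<integral>\<^sup>+x. e2ennreal (- h x) \<partial>m)"
  proof (rule nn_integral_diff)
    show "(\<integral>\<^sup>+x. e2ennreal (- h x) \<partial>m) \<noteq> \<infinity>"
    proof -
      have "(\<integral>\<^sup>+x. e2ennreal (- h x) \<partial>m) \<le> (\<integral>\<^sup>+x. ennreal B \<partial>m)"
        using e2_shift(2)[OF B hb] by (intro nn_integral_mono) auto
      also have "\<dots> = ennreal B" by (simp add: emeasure_space_1)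
      finally show ?thesis by (auto simp: top_unique)
    qed
  qed (use nm e2_shift(2)[OF B hb] in auto)
  also have "(\<integral>\<^sup>+x. ennreal B \<partial>m) = ennreal B" by (simp add: emeasure_space_1)
  finally have X: "(\<integral>\<^sup>+x. e2ennreal (h x + ereal B) \<partial>m) = (\<integral>\<^sup>+x. e2ennreal (h x) \<partial>m) + (ennreal B - (\<integral>\<^sup>+x. e2ennreal (- h x) \<partial>m))" .
  define Pp where "Pp = (\<integral>\<^sup>+x. e2ennreal (h x) \<partial>m)"
  define Nn where "Nn = (\<integral>\<^sup>+x. e2ennreal (- h x) \<partial>m)"
  have NB: "Nn \<le> ennreal B"
  proof -
    have "Nn \<le> (\<integral>\<^sup>+x. ennreal B \<partial>m)" unfolding Nn_def
      using e2_shift(2)[OF B hb] by (intro nn_integral_mono) auto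
    then show ?thesis by (simp add: emeasure_space_1)
  qed
  have "Nn \<noteq> \<top>" using NB by (auto simp: top_unique)
  then obtain n where n: "Nn = ennreal n" "n \<ge> 0" using ennreal_cases[of Nn] by auto
  then have "n \<le> B" using NB B by (simp add: ennreal_le_iff)
  note n = n this
  have "enn2ereal (Pp + (ennreal B - Nn)) - ereal B = enn2ereal Pp - enn2ereal Nn"
  proof -
    have "ennreal B - Nn = ennreal (B - n)" using n B by (simp add: ennreal_minus)
    then have "enn2ereal (Pp + (ennreal B - Nn)) = enn2ereal Pp + ereal (B - n)"
      using n by (simp add: plus_ennreal.rep_eq enn2ereal_ennreal)
    moreover have "enn2ereal Nn = ereal n" using n by (simp add: enn2ereal_ennreal)
    moreover have "enn2ereal Pp + ereal (B - n) - ereal B = enn2ereal Pp - ereal n"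
      by (cases "enn2ereal Pp") auto
    ultimately show ?thesis by simp
  qed
  then show ?thesis unfolding ereal_integral_def X Pp_def[symmetric] Nn_def[symmetric] by simp
qed


definition hA :: "(real \<Rightarrow> real) \<Rightarrow> real \<Rightarrow> ereal" where
  "hA Q = (\<lambda>s. if s \<in> {0..1} then AQ Q s else 0)"
definition trunc :: "(real \<Rightarrow> real) \<Rightarrow> nat \<Rightarrow> real \<Rightarrow> real" where
  "trunc Q N = (\<lambda>x. min (Q x) (real N))"

lemma QSetD:
  assumes "Q \<in> QSet"
  shows "mono_on {0..<1} Q" "\<And>t. t \<in> {0..<1} \<Longrightarrow> continuous (at_right t) Q"
    "(\<lambda>x. indicator {0..<1} x * Q x) \<in> borel_measurable borel"
    "integrable lborel (\<lambda>x. indicator {0..<1} x * (Q x)\<^sup>2)"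
  using assms unfolding QSet_def set_borel_measurable_def set_integrable_def by auto

lemma QSetI:
  assumes "mono_on {0..<1} Q" "\<And>t. t \<in> {0..<1} \<Longrightarrow> continuous (at_right t) Q"
    "(\<lambda>x. indicator {0..<1} x * Q x) \<in> borel_measurable borel"
    "integrable lborel (\<lambda>x. indicator {0..<1} x * (Q x)\<^sup>2)"
  shows "Q \<in> QSet"
  using assms unfolding QSet_def set_borel_measurable_def set_integrable_def by auto

lemma trunc_QSet:
  assumes Q: "Q \<in> QSet"
  shows "trunc Q N \<in> QSet" "niceQ (trunc Q N) (max \<bar>Q 0\<bar> (real N))"
proof -
  note d = QSetD[OF Q]
  have mono: "mono_on {0..<1} (trunc Q N)" unfolding trunc_def
    by (intro mono_onI min.mono mono_onD[OF d(1)]) auto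
  have meq: "(\<lambda>x. indicator {0..<1} x * trunc Q N x) = (\<lambda>x. min (indicator {0..<1} x * Q x) (indicator {0..<1} x * real N))"
    unfolding trunc_def by (auto simp: fun_eq_iff indicator_def)
  have meas: "(\<lambda>x. indicator {0..<1} x * trunc Q N x) \<in> borel_measurable borel"
    unfolding meq using d(3) by auto
  have "trunc Q N \<in> QSet"
  proof (rule QSetI[OF mono])
    show "continuous (at_right t) (trunc Q N)" if "t \<in> {0..<1}" for t
      unfolding trunc_def using d(2)[OF that] by (intro continuous_intros)
    show "(\<lambda>x. indicator {0..<1} x * trunc Q N x) \<in> borel_measurable borel" by fact
    have i: "integrable lborel (\<lambda>x. indicator {0..<1} x * (Q x)\<^sup>2 + indicator {0..<1} x * (real N)\<^sup>2)"
      using d(4) by (intro Bochner_Integration.integrable_add integrable_mult_left integrable_real_indicator)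
        (auto simp: emeasure_lborel_Ico)
    show "integrable lborel (\<lambda>x. indicator {0..<1} x * (trunc Q N x)\<^sup>2)"
    proof (rule Bochner_Integration.integrable_bound[OF i])
      have "(\<lambda>x. indicator {0..<1} x * (trunc Q N x)\<^sup>2) = (\<lambda>x. (indicator {0..<1} x * trunc Q N x) * (indicator {0..<1} x * trunc Q N x))"
        by (auto simp: fun_eq_iff indicator_def power2_eq_square)
      then show "(\<lambda>x. indicator {0..<1} x * (trunc Q N x)\<^sup>2) \<in> borel_measurable lborel" using meas by simp
      show "AE x in lborel. norm (indicator {0..<1} x * (trunc Q N x)\<^sup>2) \<le> norm (indicator {0..<1} x * (Q x)\<^sup>2 + indicator {0..<1} x * (real N)\<^sup>2)"
        by (rule AE_I2) (auto simp: indicator_def trunc_def min_def power2_eq_square)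
    qed
  qed
  then show "trunc Q N \<in> QSet" .
  have "\<forall>t\<in>{0..<1}. \<bar>trunc Q N t\<bar> \<le> max \<bar>Q 0\<bar> (real N)"
  proof
    fix t :: real assume t: "t \<in> {0..<1}"
    have "Q 0 \<le> Q t" using t by (intro mono_onD[OF d(1)]) auto
    then show "\<bar>trunc Q N t\<bar> \<le> max \<bar>Q 0\<bar> (real N)" unfolding trunc_def by (auto simp: min_def)
  qed
  then show "niceQ (trunc Q N) (max \<bar>Q 0\<bar> (real N))" unfolding niceQ_def using mono meas by auto
qed

lemma trunc_mono: "N \<le> M \<Longrightarrow> trunc Q N x \<le> trunc Q M x"
  unfolding trunc_def by (auto simp: min_def)

lemma AQ_trunc:
  assumes Q: "Q \<in> QSet" and s: "s \<in> {0..1}"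
  shows "incseq (\<lambda>N. AQ (trunc Q N) s)" "(\<lambda>N. AQ (trunc Q N) s) \<longlonglongrightarrow> AQ Q s"
proof -
  note d = QSetD[OF Q]
  have L: "L2W Q" using L2W_QSet[OF Q] .
  have "incseq (\<lambda>N. AQ (trunc Q N) s) \<and> (\<lambda>N. AQ (trunc Q N) s) \<longlonglongrightarrow> AQ Q s"
  proof (cases "s = 0")
    case True
    have inc: "incseq (\<lambda>N. AQ (trunc Q N) 0)" unfolding AQ_def
    proof (intro incseq_SucI)
      fix n
      have "(\<Squnion>t\<in>{0..<1}. ereal (trunc Q n t)) \<le> (\<Squnion>t\<in>{0..<1}. ereal (trunc Q (Suc n) t))"
        by (rule SUP_mono) (auto intro!: bexI simp: trunc_mono)
      then show "(if (0::real) = 0 then \<Squnion>t\<in>{0..<1}. ereal (trunc Q n t) else ereal (1 / 0 * (LBINT t=ereal (1 - 0)..1. trunc Q n t)))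
          \<le> (if (0::real) = 0 then \<Squnion>t\<in>{0..<1}. ereal (trunc Q (Suc n) t) else ereal (1 / 0 * (LBINT t=ereal (1 - 0)..1. trunc Q (Suc n) t)))"
        by simp
    qed
    have "(\<Squnion>N. AQ (trunc Q N) 0) = AQ Q 0"
    proof -
      have "(\<Squnion>N. AQ (trunc Q N) 0) = (\<Squnion>N. \<Squnion>t\<in>{0..<1}. ereal (trunc Q N t))" unfolding AQ_def by simp
      also have "\<dots> = (\<Squnion>t\<in>{0..<1}. \<Squnion>N. ereal (trunc Q N t))" by (rule SUP_commute)
      also have "\<dots> = (\<Squnion>t\<in>{0..<1}. ereal (Q t))"
      proof (intro SUP_cong refl antisym)
        fix t :: real assume t: "t \<in> {0..<1}"
        show "(\<Squnion>N. ereal (trunc Q N t)) \<le> ereal (Q t)" by (intro SUP_least) (auto simp: trunc_def)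
        obtain n :: nat where "Q t \<le> real n" using real_arch_simple by blast
        then have "ereal (Q t) = ereal (trunc Q n t)" by (simp add: trunc_def)
        then show "ereal (Q t) \<le> (\<Squnion>N. ereal (trunc Q N t))" by (auto intro: SUP_upper2)
      qed
      finally show ?thesis unfolding AQ_def by simp
    qed
    then show ?thesis using True inc LIMSEQ_SUP[OF inc] by simp
  next
    case False
    then have s': "0 < s" "s \<le> 1" using s by auto
    define u where "u = 1 - s"
    have u: "0 \<le> u" "u < 1" using s' unfolding u_def by auto
    have iWQ: "integrable lborel (\<lambda>x. W x * Q x)" using L2W_int[OF L] .
    have eqi: "\<And>f. (\<lambda>x. indicator {u<..<1} x * f x) = (\<lambda>x. indicator {u<..<1} x * (W x * f x))"
      using u by (auto simp: fun_eq_iff indicator_def)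
    have int: "integrable lborel (\<lambda>x. indicator {u<..<1} x * f x)" if "L2W f" for f
    proof -
      have mf: "(\<lambda>x. W x * f x) \<in> borel_measurable borel" using that unfolding L2W_def by auto
      have "integrable lborel (\<lambda>x. indicator {u<..<1} x * (W x * f x))"
      proof (rule Bochner_Integration.integrable_bound[OF L2W_int[OF that]])
        show "(\<lambda>x. indicator {u<..<1} x * (W x * f x)) \<in> borel_measurable lborel"
          using borel_measurable_times[OF borel_measurable_indicator[of "{u<..<1}" borel] mf] by simp
        show "AE x in lborel. norm (indicator {u<..<1} x * (W x * f x)) \<le> norm (W x * f x)"
          by (rule AE_I2) (auto simp: indicator_def)
      qed
      then show ?thesis by (subst eqi)
    qed
    have LN: "L2W (trunc Q N)" for N unfolding trunc_def by (rule L2W_min[OF L]) auto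
    have Hconv: "(\<lambda>N. Hq (trunc Q N) u) \<longlonglongrightarrow> Hq Q u" unfolding Hq_def
    proof (rule integral_dominated_convergence[where w="\<lambda>x. \<bar>indicator {u<..<1} x * Q x\<bar>"])
      show "(\<lambda>x. indicator {u<..<1} x * Q x) \<in> borel_measurable lborel" using int[OF L] by auto
      show "(\<lambda>x. indicator {u<..<1} x * trunc Q N x) \<in> borel_measurable lborel" for N using int[OF LN] by auto
      show "integrable lborel (\<lambda>x. \<bar>indicator {u<..<1} x * Q x\<bar>)" using int[OF L] by auto
      show "AE x in lborel. (\<lambda>N. indicator {u<..<1} x * trunc Q N x) \<longlonglongrightarrow> indicator {u<..<1} x * Q x"
      proof (rule AE_I2)
        fix x
        obtain n :: nat where n: "Q x \<le> real n" using real_arch_simple by blast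
        have "eventually (\<lambda>N. trunc Q N x = Q x) sequentially"
          unfolding eventually_sequentially trunc_def
        proof (rule exI[of _ n], intro allI impI)
          fix N assume "n \<le> N"
          then have "real n \<le> real N" by simp
          then show "min (Q x) (real N) = Q x" using n by simp
        qed
        then show "(\<lambda>N. indicator {u<..<1} x * trunc Q N x) \<longlonglongrightarrow> indicator {u<..<1} x * Q x"
          by (intro tendsto_mult tendsto_const) (rule tendsto_eventually)
      qed
      show "AE x in lborel. norm (indicator {u<..<1} x * trunc Q N x) \<le> \<bar>indicator {u<..<1} x * Q x\<bar>" for N
        by (rule AE_I2) (auto simp: indicator_def trunc_def min_def)
    qed
    have Hinc: "Hq (trunc Q N) u \<le> Hq (trunc Q M) u" if "N \<le> M" for N M unfolding Hq_def
      by (rule integral_mono[OF int[OF LN] int[OF LN]]) (auto simp: indicator_def trunc_mono[OF that])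
    have eqA: "AQ Q' s = ereal ((1 / s) * Hq Q' u)" for Q' using AQ_pos[OF s'] unfolding u_def .
    have "incseq (\<lambda>N. AQ (trunc Q N) s)"
    proof (unfold eqA, intro incseq_SucI)
      fix n
      have "Hq (trunc Q n) u / s \<le> Hq (trunc Q (Suc n)) u / s"
        using Hinc[of n "Suc n"] s' by (intro divide_right_mono) auto
      then show "ereal (1 / s * Hq (trunc Q n) u) \<le> ereal (1 / s * Hq (trunc Q (Suc n)) u)" by simp
    qed
    moreover have "(\<lambda>N. AQ (trunc Q N) s) \<longlonglongrightarrow> AQ Q s"
      unfolding eqA by (intro tendsto_intros Hconv)
    ultimately show ?thesis by simp
  qed
  then show "incseq (\<lambda>N. AQ (trunc Q N) s)" "(\<lambda>N. AQ (trunc Q N) s) \<longlonglongrightarrow> AQ Q s" by auto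
qed

lemma hA_nice_eq:
  assumes n: "niceQ Q B"
  shows "hA Q = (\<lambda>s. ereal (indicator {0..1} s * aQ Q (clip s)))"
  unfolding hA_def by (auto simp: fun_eq_iff AQ_eq[OF n] clip_id indicator_def)

lemma hA_nice_meas:
  assumes n: "niceQ Q B"
  shows "hA Q \<in> borel_measurable borel"
proof -
  have "(\<lambda>s. indicator {0..1} s * aQ Q (clip s)) \<in> borel_measurable borel"
    using contg_meas[OF aQ_cont[OF n]] by (intro borel_measurable_times) auto
  then show ?thesis unfolding hA_nice_eq[OF n] by (rule borel_measurable_ereal)
qed

lemma hA_trunc:
  assumes Q: "Q \<in> QSet"
  shows "incseq (\<lambda>N. hA (trunc Q N) s)" "(\<lambda>N. hA (trunc Q N) s) \<longlonglongrightarrow> hA Q s"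
proof -
  have "incseq (\<lambda>N. hA (trunc Q N) s) \<and> (\<lambda>N. hA (trunc Q N) s) \<longlonglongrightarrow> hA Q s"
  proof (cases "s \<in> {0..1}")
    case True then show ?thesis unfolding hA_def using AQ_trunc[OF Q True] by simp
  next
    case False
    then have "(\<lambda>N. hA (trunc Q N) s) = (\<lambda>N. 0)" "hA Q s = 0" unfolding hA_def by auto
    then show ?thesis by (simp add: incseq_def)
  qed
  then show "incseq (\<lambda>N. hA (trunc Q N) s)" "(\<lambda>N. hA (trunc Q N) s) \<longlonglongrightarrow> hA Q s" by auto
qed

lemma hA_SUP:
  assumes Q: "Q \<in> QSet"
  shows "hA Q s = (\<Squnion>N. hA (trunc Q N) s)"
  using LIMSEQ_unique[OF hA_trunc(2)[OF Q] LIMSEQ_SUP[OF hA_trunc(1)[OF Q]]] .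

lemma hA_meas:
  assumes Q: "Q \<in> QSet"
  shows "hA Q \<in> borel_measurable borel"
proof -
  have "(\<lambda>s. \<Squnion>N. hA (trunc Q N) s) \<in> borel_measurable borel"
    using hA_nice_meas[OF trunc_QSet(2)[OF Q]] by (intro borel_measurable_SUP) auto
  moreover have "hA Q = (\<lambda>s. \<Squnion>N. hA (trunc Q N) s)" by (rule ext) (rule hA_SUP[OF Q])
  ultimately show ?thesis by simp
qed

lemma hA_lower:
  assumes Q: "Q \<in> QSet"
  shows "hA (trunc Q N) s \<ge> - ereal \<bar>Q 0\<bar>" "hA Q s \<ge> - ereal \<bar>Q 0\<bar>"
proof -
  have n0: "niceQ (trunc Q 0) \<bar>Q 0\<bar>" using trunc_QSet(2)[OF Q, of 0] by simp
  have b0: "hA (trunc Q 0) s \<ge> - ereal \<bar>Q 0\<bar>"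
  proof (cases "s \<in> {0..1}")
    case True
    then have "\<bar>aQ (trunc Q 0) s\<bar> \<le> \<bar>Q 0\<bar>" using aQ_bound[OF n0] by auto
    then show ?thesis unfolding hA_def using True AQ_eq[OF n0 True] by auto
  next
    case False then show ?thesis unfolding hA_def by auto
  qed
  have "hA (trunc Q 0) s \<le> hA (trunc Q N) s" using hA_trunc(1)[OF Q] by (auto simp: incseq_def)
  then show "hA (trunc Q N) s \<ge> - ereal \<bar>Q 0\<bar>" using b0 by simp
  have "hA (trunc Q 0) s \<le> hA Q s" using incseq_le[OF hA_trunc(1)[OF Q] hA_trunc(2)[OF Q]] by simp
  then show "hA Q s \<ge> - ereal \<bar>Q 0\<bar>" using b0 by simp
qed

lemma EI_trunc:
  assumes Q: "Q \<in> QSet" and m: "m \<in> M1Set"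
  shows "(\<lambda>N. ereal_integral m (hA (trunc Q N))) \<longlonglongrightarrow> ereal_integral m (hA Q)"
proof -
  define B where "B = \<bar>Q 0\<bar>"
  have B: "B \<ge> 0" unfolding B_def by simp
  have P: "prob_space m" using M1SetD(1)[OF m] .
  have mcong: "borel_measurable m = borel_measurable borel"
    using M1SetD(2)[OF m] by (intro measurable_cong_sets) auto
  have mN: "hA (trunc Q N) \<in> borel_measurable m" for N
    unfolding mcong using hA_nice_meas[OF trunc_QSet(2)[OF Q]] .
  have mQ: "hA Q \<in> borel_measurable m" unfolding mcong using hA_meas[OF Q] .
  have eN: "ereal_integral m (hA (trunc Q N)) = enn2ereal (\<integral>\<^sup>+x. e2ennreal (hA (trunc Q N) x + ereal B) \<partial>m) - ereal B" for N
    using EI_shift[OF P mN B] hA_lower(1)[OF Q] unfolding B_def by auto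
  have eQ: "ereal_integral m (hA Q) = enn2ereal (\<integral>\<^sup>+x. e2ennreal (hA Q x + ereal B) \<partial>m) - ereal B"
    using EI_shift[OF P mQ B] hA_lower(2)[OF Q] unfolding B_def by auto
  define G where "G = (\<lambda>N x. e2ennreal (hA (trunc Q N) x + ereal B))"
  have Ginc: "incseq G"
  proof (rule incseq_SucI, rule le_funI)
    fix N x
    have "hA (trunc Q N) x \<le> hA (trunc Q (Suc N)) x" using hA_trunc(1)[OF Q] by (auto simp: incseq_def)
    then show "G N x \<le> G (Suc N) x" unfolding G_def by (intro e2ennreal_mono add_right_mono)
  qed
  have Gm: "G N \<in> borel_measurable m" for N unfolding G_def using mN[of N] measurable_e2ennreal by measurable
  have Gl: "(\<lambda>N. G N x) \<longlonglongrightarrow> e2ennreal (hA Q x + ereal B)" for x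
    unfolding G_def
    by (intro tendsto_e2ennrealI tendsto_add_ereal_general1 hA_trunc(2)[OF Q] tendsto_const) auto
  have "(\<lambda>N. \<integral>\<^sup>+x. G N x \<partial>m) \<longlonglongrightarrow> (\<integral>\<^sup>+x. e2ennreal (hA Q x + ereal B) \<partial>m)"
    by (rule nn_integral_LIMSEQ[OF Ginc Gm Gl])
  then have "(\<lambda>N. enn2ereal (\<integral>\<^sup>+x. G N x \<partial>m) - ereal B) \<longlonglongrightarrow> enn2ereal (\<integral>\<^sup>+x. e2ennreal (hA Q x + ereal B) \<partial>m) - ereal B"
    by (intro tendsto_diff_ereal_general tendsto_enn2erealI tendsto_const) auto
  then show ?thesis unfolding eN eQ G_def .
qed

definition Qb :: "(real \<Rightarrow> real) set" where "Qb = {Q \<in> QSet. \<exists>B. niceQ Q B}"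

lemma trunc_Qb: "Q \<in> QSet \<Longrightarrow> trunc Q N \<in> Qb"
  unfolding Qb_def using trunc_QSet by blast

lemma Kfun_alt:
  "Kfun P \<rho> X0 Q m \<mu> \<beta> lam = ereal (Jf P \<rho> \<beta> lam Q) - ereal \<mu> * ereal_integral m (hA Q)
     + ereal \<mu> * ereal_integral m (hA (quantile P X0))"
  unfolding Kfun_def Jf_def hA_def by simp

lemma Kfun_trunc:
  assumes Q: "Q \<in> QSet" and m: "m \<in> M1Set" and q: "L2W (\<lambda>s. quantile P \<rho> (1 - s))"
    and n0: "niceQ (quantile P X0) C0"
  shows "(\<lambda>N. Kfun P \<rho> X0 (trunc Q N) m \<mu> \<beta> lam) \<longlonglongrightarrow> Kfun P \<rho> X0 Q m \<mu> \<beta> lam"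
proof -
  have EI0: "ereal_integral m (hA (quantile P X0)) = ereal (Lf (aQ (quantile P X0)) m)"
    using EI_nice[OF n0 m] unfolding hA_def .
  have J: "(\<lambda>N. ereal (Jf P \<rho> \<beta> lam (trunc Q N))) \<longlonglongrightarrow> ereal (Jf P \<rho> \<beta> lam Q)"
    using Jf_trunc[OF L2W_QSet[OF Q] q] unfolding trunc_def by (intro tendsto_ereal)
  have E: "(\<lambda>N. ereal \<mu> * ereal_integral m (hA (trunc Q N))) \<longlonglongrightarrow> ereal \<mu> * ereal_integral m (hA Q)"
    by (intro tendsto_cmult_ereal EI_trunc[OF Q m]) auto
  have "(\<lambda>N. ereal (Jf P \<rho> \<beta> lam (trunc Q N)) - ereal \<mu> * ereal_integral m (hA (trunc Q N)))
      \<longlonglongrightarrow> ereal (Jf P \<rho> \<beta> lam Q) - ereal \<mu> * ereal_integral m (hA Q)"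
    by (intro tendsto_diff_ereal_general J E) auto
  then have "(\<lambda>N. ereal (Jf P \<rho> \<beta> lam (trunc Q N)) - ereal \<mu> * ereal_integral m (hA (trunc Q N))
      + ereal \<mu> * ereal_integral m (hA (quantile P X0)))
      \<longlonglongrightarrow> ereal (Jf P \<rho> \<beta> lam Q) - ereal \<mu> * ereal_integral m (hA Q) + ereal \<mu> * ereal_integral m (hA (quantile P X0))"
    by (intro tendsto_add_ereal_general1 tendsto_const) (auto simp: EI0)
  then show ?thesis unfolding Kfun_alt .
qed

lemma INF_Qb_le:
  assumes Q: "Q \<in> QSet" and m: "m \<in> M1Set" and q: "L2W (\<lambda>s. quantile P \<rho> (1 - s))"
    and n0: "niceQ (quantile P X0) C0"
  shows "(INF Q'\<in>Qb. Kfun P \<rho> X0 Q' m \<mu> \<beta> lam) \<le> Kfun P \<rho> X0 Q m \<mu> \<beta> lam"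
proof (rule tendsto_lowerbound[OF Kfun_trunc[OF Q m q n0]])
  show "\<forall>\<^sub>F N in sequentially. (INF Q'\<in>Qb. Kfun P \<rho> X0 Q' m \<mu> \<beta> lam) \<le> Kfun P \<rho> X0 (trunc Q N) m \<mu> \<beta> lam"
    by (intro always_eventually allI INF_lower trunc_Qb[OF Q])
qed simp

lemma weak_duality:
  fixes f :: "'q \<Rightarrow> 'm \<Rightarrow> ereal"
  shows "(SUP m\<in>M. INF Q\<in>Y. f Q m) \<le> (INF Q\<in>Y. SUP m\<in>M. f Q m)"
proof (intro SUP_least INF_greatest)
  fix m Q assume m: "m \<in> M" and Q: "Q \<in> Y"
  have "(INF Q\<in>Y. f Q m) \<le> f Q m" using Q by (rule INF_lower)
  also have "\<dots> \<le> (SUP m\<in>M. f Q m)" using m by (rule SUP_upper)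
  finally show "(INF Q\<in>Y. f Q m) \<le> (SUP m\<in>M. f Q m)" .
qed

lemma nice_sq_int:
  assumes n: "niceQ Q B"
  shows "integrable lborel (\<lambda>x. indicator {0..<1} x * (Q x)\<^sup>2)"
proof -
  have m: "(\<lambda>x. indicator {0..<1} x * Q x) \<in> borel_measurable borel" using n unfolding niceQ_def by auto
  have e: "(\<lambda>x. indicator {0..<1} x * (Q x)\<^sup>2) = (\<lambda>x. (indicator {0..<1} x * Q x) * (indicator {0..<1} x * Q x))"
    by (auto simp: fun_eq_iff indicator_def power2_eq_square)
  have b: "\<forall>t\<in>{0..<1}. \<bar>Q t\<bar> \<le> B" using n unfolding niceQ_def by auto
  show ?thesis
  proof (rule integrableI_bounded_set[of "{0..<1}" _ _ "B\<^sup>2"])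
    show "(\<lambda>x. indicator {0..<1} x * (Q x)\<^sup>2) \<in> borel_measurable lborel" unfolding e using m by simp
    show "AE x\<in>{0..<1} in lborel. norm (indicator {0..<1} x * (Q x)\<^sup>2) \<le> B\<^sup>2"
    proof (rule AE_I2, rule impI)
      fix x :: real assume x: "x \<in> {0..<1}"
      then have "\<bar>Q x\<bar> \<le> B" using b by auto
      then have "(Q x)\<^sup>2 \<le> B\<^sup>2" by (metis abs_ge_zero power2_abs power_mono)
      then show "norm (indicator {0..<1} x * (Q x)\<^sup>2) \<le> B\<^sup>2" using x by auto
    qed
  qed (auto simp: emeasure_lborel_Ico indicator_def)
qed

lemma Qb_lin:
  assumes Q1: "Q1 \<in> Qb" and Q2: "Q2 \<in> Qb" and t: "t \<in> {0..1}"
  shows "(\<lambda>s. t * Q1 s + (1 - t) * Q2 s) \<in> Qb"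
    "\<And>s. s \<in> {0..1} \<Longrightarrow> aQ (\<lambda>s. t * Q1 s + (1 - t) * Q2 s) s = t * aQ Q1 s + (1 - t) * aQ Q2 s"
proof -
  obtain B1 B2 where n1: "niceQ Q1 B1" and n2: "niceQ Q2 B2" and q1: "Q1 \<in> QSet" and q2: "Q2 \<in> QSet"
    using Q1 Q2 unfolding Qb_def by auto
  have c: "t \<ge> 0" "1 - t \<ge> 0" using t by auto
  note nl = nice_lin[OF n1 n2 c]
  show "\<And>s. s \<in> {0..1} \<Longrightarrow> aQ (\<lambda>s. t * Q1 s + (1 - t) * Q2 s) s = t * aQ Q1 s + (1 - t) * aQ Q2 s"
    by (rule nl(2))
  have "(\<lambda>s. t * Q1 s + (1 - t) * Q2 s) \<in> QSet"
  proof (rule QSetI)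
    show "mono_on {0..<1} (\<lambda>s. t * Q1 s + (1 - t) * Q2 s)" using nl(1) unfolding niceQ_def by auto
    show "continuous (at_right x) (\<lambda>s. t * Q1 s + (1 - t) * Q2 s)" if "x \<in> {0..<1}" for x
      using QSetD(2)[OF q1 that] QSetD(2)[OF q2 that] by (intro continuous_intros)
    show "(\<lambda>x. indicator {0..<1} x * (t * Q1 x + (1 - t) * Q2 x)) \<in> borel_measurable borel"
      using nl(1) unfolding niceQ_def by auto
    show "integrable lborel (\<lambda>x. indicator {0..<1} x * (t * Q1 x + (1 - t) * Q2 x)\<^sup>2)"
      by (rule nice_sq_int[OF nl(1)])
  qed
  then show "(\<lambda>s. t * Q1 s + (1 - t) * Q2 s) \<in> Qb" unfolding Qb_def using nl(1) by auto
qed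

lemma zero_Qb: "(\<lambda>_. 0) \<in> Qb"
proof -
  have n: "niceQ (\<lambda>_. 0) 0" unfolding niceQ_def by (auto intro: mono_onI)
  have "(\<lambda>_::real. 0::real) \<in> QSet"
    by (rule QSetI) (auto intro: mono_onI)
  then show ?thesis unfolding Qb_def using n by auto
qed

theorem main_minimax:
  fixes P :: "'a measure" and \<rho> X0 :: "'a \<Rightarrow> real"
  assumes P: "prob_space P"
    and rm: "\<rho> \<in> borel_measurable P" and r2: "integrable P (\<lambda>\<omega>. (\<rho> \<omega>)\<^sup>2)"
    and xm: "X0 \<in> borel_measurable P" and xb: "AE \<omega> in P. \<bar>X0 \<omega>\<bar> \<le> C0"
    and mu: "\<mu> \<ge> 0"
  shows "\<exists>m1\<in>M1Set.
       (INF Q\<in>QSet. Kfun P \<rho> X0 Q m1 \<mu> \<beta> lam)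
         = (SUP m\<in>M1Set. INF Q\<in>QSet. Kfun P \<rho> X0 Q m \<mu> \<beta> lam)
     \<and> (SUP m\<in>M1Set. INF Q\<in>QSet. Kfun P \<rho> X0 Q m \<mu> \<beta> lam)
         = (INF Q\<in>QSet. SUP m\<in>M1Set. Kfun P \<rho> X0 Q m \<mu> \<beta> lam)"
proof -
  define K where "K = (\<lambda>Q m. Kfun P \<rho> X0 Q m \<mu> \<beta> lam)"
  define Q0 where "Q0 = quantile P X0"
  have q: "L2W (\<lambda>s. quantile P \<rho> (1 - s))"
    unfolding L2W_def using quantile_rho[OF P rm r2] by auto
  have n0: "niceQ Q0 C0" unfolding Q0_def by (rule quantile_X0_nice[OF P xm xb])
  define F where "F = (\<lambda>m Q. Jf P \<rho> \<beta> lam Q - \<mu> * Lf (aQ Q) m + \<mu> * Lf (aQ Q0) m)"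
  define phi where "phi = (\<lambda>Q y. F (rep y) Q)"
  have KF: "K Q m = ereal (F m Q)" if Q: "Q \<in> Qb" and m: "m \<in> M1Set" for Q m
  proof -
    obtain B where n: "niceQ Q B" using Q unfolding Qb_def by auto
    have "ereal_integral m (hA Q) = ereal (Lf (aQ Q) m)" using EI_nice[OF n m] unfolding hA_def .
    moreover have "ereal_integral m (hA Q0) = ereal (Lf (aQ Q0) m)" using EI_nice[OF n0 m] unfolding hA_def .
    ultimately show ?thesis unfolding K_def Kfun_alt F_def Q0_def[symmetric] by simp
  qed
  have phimom: "phi Q (mom m) = F m Q" if Q: "Q \<in> Qb" and m: "m \<in> M1Set" for Q m
  proof -
    obtain B where n: "niceQ Q B" using Q unfolding Qb_def by auto
    show ?thesis unfolding phi_def F_def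
      using Lf_rep_mom[OF aQ_cont[OF n] m] Lf_rep_mom[OF aQ_cont[OF n0] m] by simp
  qed
  have phicont: "continuous_on MSet (phi Q)" if Q: "Q \<in> Qb" for Q
  proof -
    obtain B where n: "niceQ Q B" using Q unfolding Qb_def by auto
    show ?thesis unfolding phi_def F_def
      using Lf_rep_cont[OF aQ_cont[OF n]] Lf_rep_cont[OF aQ_cont[OF n0]] by (intro continuous_intros) auto
  qed
  have phiaff: "maff mixf MSet (phi Q)" if Q: "Q \<in> Qb" for Q
  proof -
    obtain B where n: "niceQ Q B" using Q unfolding Qb_def by auto
    show ?thesis unfolding maff_def
    proof (intro ballI)
      fix y1 y2 t assume y: "y1 \<in> MSet" "y2 \<in> MSet" and t: "t \<in> {0..1::real}"
      have a1: "Lf (aQ Q) (rep (mixf t y1 y2)) = t * Lf (aQ Q) (rep y1) + (1 - t) * Lf (aQ Q) (rep y2)"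
        by (rule Lf_rep_aff[OF aQ_cont[OF n] y t])
      have a2: "Lf (aQ Q0) (rep (mixf t y1 y2)) = t * Lf (aQ Q0) (rep y1) + (1 - t) * Lf (aQ Q0) (rep y2)"
        by (rule Lf_rep_aff[OF aQ_cont[OF n0] y t])
      show "phi Q (mixf t y1 y2) = t * phi Q y1 + (1 - t) * phi Q y2"
        unfolding phi_def F_def a1 a2 by (simp add: algebra_simps)
    qed
  qed
  have Lflin: "Lf (aQ (\<lambda>s. t * Q1 s + (1 - t) * Q2 s)) m = t * Lf (aQ Q1) m + (1 - t) * Lf (aQ Q2) m"
    if Q1: "Q1 \<in> Qb" and Q2: "Q2 \<in> Qb" and t: "t \<in> {0..1}" and m: "m \<in> M1Set" for Q1 Q2 t m
  proof -
    obtain B1 B2 where n1: "niceQ Q1 B1" and n2: "niceQ Q2 B2" using Q1 Q2 unfolding Qb_def by auto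
    have "Lf (aQ (\<lambda>s. t * Q1 s + (1 - t) * Q2 s)) m = (\<integral>x. t * aQ Q1 (clip x) + (1 - t) * aQ Q2 (clip x) \<partial>m)"
      unfolding Lf_def using Qb_lin(2)[OF Q1 Q2 t] clip_in by simp
    also have "\<dots> = t * Lf (aQ Q1) m + (1 - t) * Lf (aQ Q2) m"
      unfolding Lf_def using contg_integrable[OF aQ_cont[OF n1] m] contg_integrable[OF aQ_cont[OF n2] m] by simp
    finally show ?thesis .
  qed
  have cvx: "\<forall>\<phi>1\<in>phi ` Qb. \<forall>\<phi>2\<in>phi ` Qb. \<forall>t\<in>{0..1}. \<exists>\<phi>\<in>phi ` Qb. \<forall>x\<in>MSet. \<phi> x \<le> t * \<phi>1 x + (1 - t) * \<phi>2 x"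
  proof (intro ballI)
    fix \<phi>1 \<phi>2 t assume p1: "\<phi>1 \<in> phi ` Qb" and p2: "\<phi>2 \<in> phi ` Qb" and t: "t \<in> {0..1::real}"
    obtain Q1 Q2 where Q1: "Q1 \<in> Qb" "\<phi>1 = phi Q1" and Q2: "Q2 \<in> Qb" "\<phi>2 = phi Q2" using p1 p2 by auto
    define Qm where "Qm = (\<lambda>s. t * Q1 s + (1 - t) * Q2 s)"
    have Qm: "Qm \<in> Qb" unfolding Qm_def by (rule Qb_lin(1)[OF Q1(1) Q2(1) t])
    have "\<forall>x\<in>MSet. phi Qm x \<le> t * phi Q1 x + (1 - t) * phi Q2 x"
    proof
      fix y assume y: "y \<in> MSet"
      have r: "rep y \<in> M1Set" using rep[OF y] by auto
      have J: "Jf P \<rho> \<beta> lam Qm \<le> t * Jf P \<rho> \<beta> lam Q1 + (1 - t) * Jf P \<rho> \<beta> lam Q2"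
        unfolding Qm_def using Q1(1) Q2(1) unfolding Qb_def
        by (intro Jf_convex[OF _ _ q t] L2W_QSet) auto
      have L: "Lf (aQ Qm) (rep y) = t * Lf (aQ Q1) (rep y) + (1 - t) * Lf (aQ Q2) (rep y)"
        unfolding Qm_def by (rule Lflin[OF Q1(1) Q2(1) t r])
      show "phi Qm y \<le> t * phi Q1 y + (1 - t) * phi Q2 y"
        unfolding phi_def F_def L using J by (simp add: algebra_simps)
    qed
    then show "\<exists>\<phi>\<in>phi ` Qb. \<forall>x\<in>MSet. \<phi> x \<le> t * \<phi>1 x + (1 - t) * \<phi>2 x"
      using Qm Q1 Q2 by auto
  qed
  have supbound: "(SUP m\<in>M1Set. K Q m) \<le> ereal (phi Q y)" if Q: "Q \<in> Qb" and y: "\<forall>y'\<in>MSet. phi Q y' \<le> phi Q y" for Q y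
  proof (intro SUP_least)
    fix m assume m: "m \<in> M1Set"
    have "mom m \<in> MSet" using m unfolding MSet_def by auto
    then show "K Q m \<le> ereal (phi Q y)" using y KF[OF Q m] phimom[OF Q m] by auto
  qed
  have attain: "\<exists>y\<in>MSet. \<forall>y'\<in>MSet. phi Q y' \<le> phi Q y" if Q: "Q \<in> Qb" for Q
    using continuous_attains_sup[OF compact_MSet MSet_nonempty phicont[OF Q]] .
  define V where "V = (INF Q\<in>QSet. SUP m\<in>M1Set. K Q m)"
  have wd: "(SUP m\<in>M1Set. INF Q\<in>QSet. K Q m) \<le> V" unfolding V_def by (rule weak_duality)
  have QbQ: "Qb \<subseteq> QSet" unfolding Qb_def by auto
  have Vfin: "V < \<infinity>"
  proof -
    obtain y where y: "y \<in> MSet" "\<forall>y'\<in>MSet. phi (\<lambda>_. 0) y' \<le> phi (\<lambda>_. 0) y" using attain[OF zero_Qb] by auto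
    have "V \<le> (SUP m\<in>M1Set. K (\<lambda>_. 0) m)" unfolding V_def using zero_Qb QbQ by (intro INF_lower) auto
    also have "\<dots> \<le> ereal (phi (\<lambda>_. 0) y)" by (rule supbound[OF zero_Qb y(2)])
    finally show ?thesis by auto
  qed
  show ?thesis
  proof (cases "V = - \<infinity>")
    case True
    define m1 where "m1 = return borel (0::real)"
    have m1: "m1 \<in> M1Set" unfolding m1_def by (rule M1Set_nonempty)
    have "(INF Q\<in>QSet. K Q m1) \<le> (SUP m\<in>M1Set. INF Q\<in>QSet. K Q m)" using m1 by (rule SUP_upper)
    then have e1: "(SUP m\<in>M1Set. INF Q\<in>QSet. K Q m) = - \<infinity>" "(INF Q\<in>QSet. K Q m1) = - \<infinity>"
      using wd True by auto
    show ?thesis using m1 e1 True unfolding K_def V_def by auto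
  next
    case False
    then obtain c where c: "V = ereal c" using Vfin by (cases V) auto
    have hyp: "\<forall>\<phi>\<in>phi ` Qb. \<exists>x\<in>MSet. \<phi> x \<ge> c"
    proof
      fix \<phi> assume "\<phi> \<in> phi ` Qb"
      then obtain Q where Q: "Q \<in> Qb" "\<phi> = phi Q" by auto
      obtain y where y: "y \<in> MSet" "\<forall>y'\<in>MSet. phi Q y' \<le> phi Q y" using attain[OF Q(1)] by auto
      have "ereal c \<le> (SUP m\<in>M1Set. K Q m)" unfolding c[symmetric] V_def using Q(1) QbQ by (intro INF_lower) auto
      also have "\<dots> \<le> ereal (phi Q y)" by (rule supbound[OF Q(1) y(2)])
      finally show "\<exists>x\<in>MSet. \<phi> x \<ge> c" using y Q by auto
    qed
    have ca: "\<forall>\<phi>\<in>phi ` Qb. continuous_on MSet \<phi> \<and> maff mixf MSet \<phi>"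
      using phicont phiaff by auto
    have mc: "mixcl mixf MSet" unfolding mixcl_def using MSet_mixcl by auto
    obtain y1 where y1: "y1 \<in> MSet" "\<forall>\<phi>\<in>phi ` Qb. \<phi> y1 \<ge> c"
      using kyfan[OF compact_MSet MSet_nonempty mc ca cvx hyp] by blast
    define m1 where "m1 = rep y1"
    have m1: "m1 \<in> M1Set" using rep[OF y1(1)] unfolding m1_def by auto
    have geQb: "K Q m1 \<ge> ereal c" if Q: "Q \<in> Qb" for Q
    proof -
      have "phi Q y1 \<ge> c" using y1(2) Q by auto
      moreover have "phi Q y1 = F m1 Q" unfolding phi_def m1_def by simp
      moreover have "K Q m1 = ereal (F m1 Q)" by (rule KF[OF Q m1])
      ultimately show ?thesis by simp
    qed
    have "(INF Q\<in>Qb. K Q m1) \<le> (INF Q\<in>QSet. K Q m1)"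
    proof (intro INF_greatest)
      fix Q assume Q: "Q \<in> QSet"
      show "(INF Q\<in>Qb. K Q m1) \<le> K Q m1" unfolding K_def by (rule INF_Qb_le[OF Q m1 q n0[unfolded Q0_def]])
    qed
    moreover have "ereal c \<le> (INF Q\<in>Qb. K Q m1)" using geQb by (intro INF_greatest) auto
    ultimately have ge: "V \<le> (INF Q\<in>QSet. K Q m1)" using c by simp
    have le: "(INF Q\<in>QSet. K Q m1) \<le> (SUP m\<in>M1Set. INF Q\<in>QSet. K Q m)" using m1 by (rule SUP_upper)
    have "(INF Q\<in>QSet. K Q m1) = (SUP m\<in>M1Set. INF Q\<in>QSet. K Q m)" using ge le wd by auto
    moreover have "(SUP m\<in>M1Set. INF Q\<in>QSet. K Q m) = V" using ge le wd by auto
    ultimately show ?thesis using m1 unfolding K_def V_def by auto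
  qed
qed

theorem lemmaB2:
  fixes P :: "'a measure" and \<rho> X0 :: "'a \<Rightarrow> real"
  assumes "prob_space P" and "complete_measure P" and "nonatomic P"
    and "\<rho> \<in> borel_measurable P" and "integrable P (\<lambda>\<omega>. (\<rho> \<omega>)\<^sup>2)"
    and "AE \<omega> in P. \<rho> \<omega> > 0"
    and "prob_space.variance P \<rho> > 0"
    and "X0 \<in> borel_measurable P" and "\<exists>C. AE \<omega> in P. \<bar>X0 \<omega>\<bar> \<le> C"
  shows "\<forall>\<beta>::real. \<forall>lam::real. \<forall>\<mu>::real. lam \<ge> 0 \<longrightarrow> \<mu> \<ge> 0 \<longrightarrow>
    (\<exists>m1\<in>M1Set.
       (INF Q\<in>QSet. Kfun P \<rho> X0 Q m1 \<mu> \<beta> lam)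
         = (SUP m\<in>M1Set. INF Q\<in>QSet. Kfun P \<rho> X0 Q m \<mu> \<beta> lam)
     \<and> (SUP m\<in>M1Set. INF Q\<in>QSet. Kfun P \<rho> X0 Q m \<mu> \<beta> lam)
         = (INF Q\<in>QSet. SUP m\<in>M1Set. Kfun P \<rho> X0 Q m \<mu> \<beta> lam))"
proof (intro allI impI)
  fix \<beta> lam \<mu> :: real
  assume lam: "lam \<ge> 0" and mu: "\<mu> \<ge> 0"
  obtain C where C: "AE \<omega> in P. \<bar>X0 \<omega>\<bar> \<le> C" using assms(9) by auto
  show "\<exists>m1\<in>M1Set.
       (INF Q\<in>QSet. Kfun P \<rho> X0 Q m1 \<mu> \<beta> lam)
         = (SUP m\<in>M1Set. INF Q\<in>QSet. Kfun P \<rho> X0 Q m \<mu> \<beta> lam)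
     \<and> (SUP m\<in>M1Set. INF Q\<in>QSet. Kfun P \<rho> X0 Q m \<mu> \<beta> lam)
         = (INF Q\<in>QSet. SUP m\<in>M1Set. Kfun P \<rho> X0 Q m \<mu> \<beta> lam)"
    by (rule main_minimax[OF assms(1) assms(4) assms(5) assms(8) C mu])
qed

end
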